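(* Let $k,s\in\mathbb{R}$ with $0\le s\le 2k$ and $|k-s|<1$. Then for every sufficiently small $\eta>0$ there is a constant $C$ such that for all functions $u,w$ on $\mathbb{T}_x\times\mathbb{R}_t$, $$\|u\bar w\|_{H^{-1/2+\eta}_tH^s_x}\le C\|u\|_{X^{k,1/2+\eta}_{per}}\|w\|_{X^{k,1/2+\eta}_{per}}.$$
   Context: $\widehat f(n,\tau)$ is the Fourier transform (Fourier coefficients in $x\in\mathbb{T}$, Fourier transform in $t$); $\langle x\rangle=1+|x|$. $\|f\|_{X^{s,b}_{per}}=\big(\sum_{n\in\mathbb{Z}}\int_{\mathbb{R}}\langle n\rangle^{2s}\langle\tau+n^2\rangle^{2b}|\widehat f(n,\tau)|^2d\tau\big)^{1/2}$ and $\|f\|_{H^b_tH^s_x}=\big(\sum_{n}\int\langle n\rangle^{2s}\langle\tau\rangle^{2b}|\widehat f(n,\tau)|^2d\tau\big)^{1/2}$. (The paper's exponents $-1/2+$, $1/2+$ are interpreted as $-1/2+\eta$, $1/2+\eta$.) *)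

theory Defs
  imports "HOL-Analysis.Analysis"
begin

text \<open>Functions u on T_x x R_t are represented by their space-time Fourier transform
  uh :: int => real => complex, uh n tau = \<widehat>u(n,tau).\<close>

definition jb :: "real \<Rightarrow> real" where
  "jb x = 1 + \<bar>x\<bar>"

definition Xper_sq :: "real \<Rightarrow> real \<Rightarrow> (int \<Rightarrow> real \<Rightarrow> complex) \<Rightarrow> ennreal" where
  "Xper_sq s b F = nn_integral (count_space UNIV) (\<lambda>n. nn_integral lborel (\<lambda>\<tau>. ennreal (jb (real_of_int n) powr (2 * s)
        * jb (\<tau> + (real_of_int n)^2) powr (2 * b) * (cmod (F n \<tau>))^2)))"

definition HH_sq :: "real \<Rightarrow> real \<Rightarrow> (int \<Rightarrow> real \<Rightarrow> complex) \<Rightarrow> ennreal" where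
  "HH_sq b s F = nn_integral (count_space UNIV) (\<lambda>n. nn_integral lborel (\<lambda>\<tau>. ennreal (jb (real_of_int n) powr (2 * s)
        * jb \<tau> powr (2 * b) * (cmod (F n \<tau>))^2)))"

text \<open>Fourier transform of the product u * conj w, in terms of uh and wh
  (up to the normalisation constant (2 pi)^(-2) of the convolution, which is absorbed
  into the constant C): conj w has transform (n,tau) |-> conj (wh (-n) (-tau)).\<close>
definition prod_conj_hat :: "(int \<Rightarrow> real \<Rightarrow> complex) \<Rightarrow> (int \<Rightarrow> real \<Rightarrow> complex)
    \<Rightarrow> int \<Rightarrow> real \<Rightarrow> complex" where
  "prod_conj_hat F G n \<tau> = (\<Sum>\<^sub>\<infinity> m::int. \<integral> \<sigma>. F (n - m) (\<tau> - \<sigma>) * cnj (G (- m) (- \<sigma>)) \<partial>lborel)"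

end

theory Submission
  imports Defs
begin

lemma jb_ge1: "jb x \<ge> 1" by (simp add: jb_def)
lemma jb_pos: "jb x > 0" by (simp add: jb_def) 
lemma jb_minus: "jb (-x) = jb x" by (simp add: jb_def)
lemma jb_diff_commute: "jb (a - b) = jb (b - a)" by (simp add: jb_def abs_minus_commute)
lemma jb_add_le: "jb (x + y) \<le> jb x * jb y"
  by (simp add: jb_def algebra_simps abs_triangle_ineq add_mono) (smt (verit) abs_triangle_ineq mult_nonneg_nonneg abs_ge_zero)
lemma jb_meas[measurable]: "jb \<in> borel_measurable borel"
  unfolding jb_def by measurable

definition PP :: "(int \<times> real) measure" where
  "PP = count_space UNIV \<Otimes>\<^sub>M lborel"

lemma sets_PP[measurable_cong]: "sets PP = sets (count_space UNIV \<Otimes>\<^sub>M lborel)"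
  by (simp add: PP_def)

lemma sf_PP: "sigma_finite_measure PP"
  unfolding PP_def
  by (intro sigma_finite_pair_measure sigma_finite_measure_count_space_countable lborel.sigma_finite_measure_axioms) auto

lemma psf_PP: "pair_sigma_finite PP PP"
  using sf_PP by (simp add: pair_sigma_finite_def)

lemma meas_PP:
  assumes "\<And>n. (\<lambda>t. f (n, t)) \<in> borel_measurable lborel"
  shows "f \<in> borel_measurable PP"
  unfolding PP_def by (rule measurable_pair_measure_countable1) (use assms in auto)

lemma II_PP:
  assumes "(\<lambda>x. f (fst x) (snd x)) \<in> borel_measurable PP"
  shows "(\<integral>\<^sup>+ n. \<integral>\<^sup>+ t. f n t \<partial>lborel \<partial>count_space UNIV) = (\<integral>\<^sup>+ x. f (fst x) (snd x) \<partial>PP)"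
proof -
  have "(\<lambda>x. f (fst x) (snd x)) \<in> borel_measurable (count_space UNIV \<Otimes>\<^sub>M lborel)"
    using assms by (simp add: PP_def)
  from lborel.nn_integral_fst[OF this] show ?thesis by (simp add: PP_def)
qed

lemma meas_PPPP:
  fixes \<Psi> :: "int \<Rightarrow> int \<Rightarrow> real \<Rightarrow> real \<Rightarrow> ennreal"
  assumes "\<And>n m. (\<lambda>x. \<Psi> n m (fst x) (snd x)) \<in> borel_measurable (lborel \<Otimes>\<^sub>M lborel)"
  shows "(\<lambda>x. \<Psi> (fst (fst x)) (fst (snd x)) (snd (fst x)) (snd (snd x))) \<in> borel_measurable (PP \<Otimes>\<^sub>M PP)"
proof -
  have "(\<lambda>x. \<Psi> (fst i) (snd i) (snd (fst x)) (snd (snd x))) \<in> borel_measurable (PP \<Otimes>\<^sub>M PP)" for i :: "int \<times> int"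
  proof -
    have "(\<lambda>x::(int\<times>real)\<times>(int\<times>real). (snd (fst x), snd (snd x))) \<in> measurable (PP \<Otimes>\<^sub>M PP) (lborel \<Otimes>\<^sub>M lborel)"
      unfolding PP_def by measurable
    from measurable_compose[OF this assms[of "fst i" "snd i"]] show ?thesis by simp
  qed
  moreover have "(\<lambda>x::(int\<times>real)\<times>(int\<times>real). (fst (fst x), fst (snd x))) \<in> measurable (PP \<Otimes>\<^sub>M PP) (count_space UNIV)"
    unfolding PP_def by measurable
  ultimately show ?thesis
    using measurable_compose_countable[where f="\<lambda>i x. \<Psi> (fst i) (snd i) (snd (fst x)) (snd (snd x))"
      and g="\<lambda>x. (fst (fst x), fst (snd x))"] by simp
qed

lemma infsum_le_nn:
  fixes h :: "int \<Rightarrow> complex"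
  shows "ennreal (cmod (infsum h UNIV)) \<le> (\<integral>\<^sup>+ m. ennreal (cmod (h m)) \<partial>count_space UNIV)"
proof (cases "(\<integral>\<^sup>+ m. ennreal (cmod (h m)) \<partial>count_space UNIV) = \<infinity>")
  case True then show ?thesis by simp
next
  case False
  then have int: "integrable (count_space UNIV) h"
    by (intro integrableI_bounded) (auto simp: top.not_eq_extremum)
  then have abs: "Infinite_Set_Sum.abs_summable_on h UNIV" by (simp add: Infinite_Set_Sum.abs_summable_on_def)
  have "infsum h UNIV = infsetsum h UNIV"
    using abs by (simp add: infsetsum_infsum)
  also have "\<dots> = integral\<^sup>L (count_space UNIV) h" by (simp add: infsetsum_def)
  finally have "ennreal (cmod (infsum h UNIV)) = ennreal (norm (integral\<^sup>L (count_space UNIV) h))" by simp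
  also have "\<dots> \<le> (\<integral>\<^sup>+ m. ennreal (cmod (h m)) \<partial>count_space UNIV)"
    using integral_norm_bound_ennreal[OF int] by simp
  finally show ?thesis .
qed

lemma integral_le_nn:
  fixes h :: "real \<Rightarrow> complex"
  shows "ennreal (cmod (integral\<^sup>L lborel h)) \<le> (\<integral>\<^sup>+ x. ennreal (cmod (h x)) \<partial>lborel)"
proof (cases "integrable lborel h")
  case True then show ?thesis using integral_norm_bound_ennreal[OF True] by simp
next
  case False then show ?thesis by (simp add: not_integrable_integral_eq)
qed

lemma pch_bound:
  fixes F G :: "int \<Rightarrow> real \<Rightarrow> complex"
  assumes [measurable]: "\<And>n. F n \<in> borel_measurable lborel" "\<And>n. G n \<in> borel_measurable lborel"
  shows "ennreal (cmod (prod_conj_hat F G n \<tau>)) \<le>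
    (\<integral>\<^sup>+ q. ennreal (cmod (F (n - fst q) (\<tau> - snd q)) * cmod (G (- fst q) (- snd q))) \<partial>PP)"
proof -
  have "ennreal (cmod (prod_conj_hat F G n \<tau>)) \<le> (\<integral>\<^sup>+ m. ennreal (cmod (\<integral> \<sigma>. F (n - m) (\<tau> - \<sigma>) * cnj (G (- m) (- \<sigma>)) \<partial>lborel)) \<partial>count_space UNIV)"
    unfolding prod_conj_hat_def by (rule infsum_le_nn)
  also have "\<dots> \<le> (\<integral>\<^sup>+ m. \<integral>\<^sup>+ \<sigma>. ennreal (cmod (F (n - m) (\<tau> - \<sigma>)) * cmod (G (- m) (- \<sigma>))) \<partial>lborel \<partial>count_space UNIV)"
    by (intro nn_integral_mono order.trans[OF integral_le_nn]) (simp add: norm_mult)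
  also have "\<dots> = (\<integral>\<^sup>+ q. ennreal (cmod (F (n - fst q) (\<tau> - snd q)) * cmod (G (- fst q) (- snd q))) \<partial>PP)"
    by (rule II_PP[where f="\<lambda>m \<sigma>. ennreal (cmod (F (n - m) (\<tau> - \<sigma>)) * cmod (G (- m) (- \<sigma>)))"], rule meas_PP) simp
  finally show ?thesis .
qed

lemma powr_step:
  fixes r :: real and N :: nat
  assumes r: "0 \<le> r" "r < 1"
  shows "(1 + real N) powr (-r) \<le> ((1 + real N) powr (1 - r) - real N powr (1 - r)) / (1 - r)"
proof (cases "N = 0")
  case True then show ?thesis using r by simp
next
  case False
  define f where "f = (\<lambda>x::real. x powr (1 - r))"
  have der: "\<And>x. real N \<le> x \<Longrightarrow> x \<le> 1 + real N \<Longrightarrow> (f has_real_derivative (1 - r) * x powr (1 - r - 1)) (at x)"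
  proof -
    fix x assume "real N \<le> x" "x \<le> 1 + real N"
    then have "x > 0" using False by (metis not_gr_zero of_nat_0_less_iff order_less_le_trans conjunct1)
    then show "(f has_real_derivative (1 - r) * x powr (1 - r - 1)) (at x)"
      unfolding f_def by (rule has_real_derivative_powr)
  qed
  obtain z where z: "real N < z" "z < 1 + real N" "f (1 + real N) - f (real N) = (1 + real N - real N) * ((1 - r) * z powr (1 - r - 1))"
    using MVT2[of "real N" "1 + real N" f "\<lambda>x. (1 - r) * x powr (1 - r - 1)", OF _ der] by auto
  have zpos: "z > 0" using z False by linarith
  have "(1 + real N) powr (-r) \<le> z powr (-r)"
    using z zpos r by (intro powr_mono2') auto
  also have "z powr (-r) = (f (1 + real N) - f (real N)) / (1 - r)"
    using z(3) r by simp
  finally show ?thesis by (simp add: f_def)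
qed

lemma powr_sum_bound:
  fixes r :: real
  assumes r: "0 \<le> r" "r < 1"
  shows "(\<Sum>j<N. (1 + real j) powr (-r)) \<le> real N powr (1 - r) / (1 - r)"
proof (induction N)
  case 0 then show ?case by simp
next
  case (Suc N)
  have "(\<Sum>j<Suc N. (1 + real j) powr (-r)) = (\<Sum>j<N. (1 + real j) powr (-r)) + (1 + real N) powr (-r)" by simp
  also have "\<dots> \<le> real N powr (1 - r) / (1 - r) + ((1 + real N) powr (1 - r) - real N powr (1 - r)) / (1 - r)"
    using Suc powr_step[OF r, of N] by linarith
  also have "\<dots> = real (Suc N) powr (1 - r) / (1 - r)"
    by (simp add: diff_divide_distrib add.commute)
  finally show ?case .
qed

lemma powr_le1': "a \<le> 0 \<Longrightarrow> 1 \<le> (x::real) \<Longrightarrow> x powr a \<le> 1"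
  using powr_mono[of a 0 x] by simp

lemma NL_point:
  fixes k p r m t :: real
  assumes r: "0 \<le> r" "r \<le> 2*k" and p: "0 < p" and t: "0 \<le> t" "t < m"
  shows "jb t powr (-2*k) * jb (m\<^sup>2 - t\<^sup>2) powr (-p)
     \<le> 2 powr p * m powr (-2*p) * (1 + t) powr (-r) + 2 powr (2*k) * (1 + m) powr (-2*k) * m powr (-p) * (m - t) powr (-p)"
proof -
  have m0: "m > 0" using t by linarith
  have jt: "jb t = 1 + t" using t by (simp add: jb_def)
  have "m * (m - t) \<le> m\<^sup>2 - t\<^sup>2" using t by (simp add: power2_eq_square algebra_simps mult_right_mono)
  also have "\<dots> \<le> jb (m\<^sup>2 - t\<^sup>2)" by (simp add: jb_def)
  finally have "jb (m\<^sup>2 - t\<^sup>2) powr (-p) \<le> (m * (m - t)) powr (-p)"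
    using m0 t p by (intro powr_mono2') auto
  also have "\<dots> = m powr (-p) * (m - t) powr (-p)" using m0 t by (simp add: powr_mult)
  finally have A: "jb (m\<^sup>2 - t\<^sup>2) powr (-p) \<le> m powr (-p) * (m - t) powr (-p)" .
  have B: "jb t powr (-2*k) * jb (m\<^sup>2 - t\<^sup>2) powr (-p) \<le> jb t powr (-2*k) * (m powr (-p) * (m - t) powr (-p))"
    using A by (intro mult_left_mono) auto
  show ?thesis
  proof (cases "2 * t \<le> m")
    case True
    have "(m - t) powr (-p) \<le> (m / 2) powr (-p)" using True m0 p by (intro powr_mono2') auto
    also have "\<dots> = 2 powr p * m powr (-p)" using m0 by (simp add: powr_divide powr_minus_divide divide_simps)
    finally have C: "(m - t) powr (-p) \<le> 2 powr p * m powr (-p)" .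
    have D: "jb t powr (-2*k) \<le> (1 + t) powr (-r)" unfolding jt using r t by (intro powr_mono) auto
    have "jb t powr (-2*k) * (m powr (-p) * (m - t) powr (-p)) \<le> (1 + t) powr (-r) * (m powr (-p) * (2 powr p * m powr (-p)))"
      using C D by (intro mult_mono) auto
    also have "\<dots> = 2 powr p * m powr (-2*p) * (1 + t) powr (-r)"
      by (simp add: powr_add[symmetric])
    finally show ?thesis using B by (smt (verit) mult_nonneg_nonneg powr_ge_zero)
  next
    case False
    have "(1 + t) powr (-2*k) \<le> ((1 + m) / 2) powr (-2*k)" using False r t by (intro powr_mono2') auto
    also have "\<dots> = 2 powr (2*k) * (1 + m) powr (-2*k)" using m0 by (simp add: powr_divide powr_minus_divide divide_simps)
    finally have C: "jb t powr (-2*k) \<le> 2 powr (2*k) * (1 + m) powr (-2*k)" unfolding jt .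
    have "jb t powr (-2*k) * (m powr (-p) * (m - t) powr (-p)) \<le> 2 powr (2*k) * (1 + m) powr (-2*k) * (m powr (-p) * (m - t) powr (-p))"
      using C by (intro mult_right_mono) auto
    then show ?thesis using B by (smt (verit) mult.assoc mult_nonneg_nonneg powr_ge_zero)
  qed
qed

lemma NL_sum:
  fixes k p r :: real and M :: nat
  assumes r: "0 \<le> r" "r < 1" "r \<le> 2*k" and p: "0 < p" "p < 1"
  shows "(\<Sum>t<M. jb (real t) powr (-2*k) * jb ((real M)\<^sup>2 - (real t)\<^sup>2) powr (-p))
     \<le> 2 powr p * real M powr (-2*p) * (real M powr (1 - r) / (1 - r))
       + 2 powr (2*k) * (1 + real M) powr (-2*k) * real M powr (-p) * (real M powr (1 - p) / (1 - p))"
proof -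
  have "(\<Sum>t<M. jb (real t) powr (-2*k) * jb ((real M)\<^sup>2 - (real t)\<^sup>2) powr (-p))
     \<le> (\<Sum>t<M. 2 powr p * real M powr (-2*p) * (1 + real t) powr (-r) + 2 powr (2*k) * (1 + real M) powr (-2*k) * real M powr (-p) * (real M - real t) powr (-p))"
    using r p by (intro sum_mono NL_point) auto
  also have "\<dots> = 2 powr p * real M powr (-2*p) * (\<Sum>t<M. (1 + real t) powr (-r)) + 2 powr (2*k) * (1 + real M) powr (-2*k) * real M powr (-p) * (\<Sum>t<M. (real M - real t) powr (-p))"
    by (simp add: sum.distrib sum_distrib_left)
  also have "(\<Sum>t<M. (real M - real t) powr (-p)) = (\<Sum>t<M. (1 + real t) powr (-p))"
  proof -
    have "(\<Sum>t<M. (real M - real t) powr (-p)) = (\<Sum>t<M. (real M - real (M - Suc t)) powr (-p))"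
      by (rule sum.nat_diff_reindex[symmetric])
    also have "\<dots> = (\<Sum>t<M. (1 + real t) powr (-p))"
      by (intro sum.cong refl) (auto simp: of_nat_diff)
    finally show ?thesis .
  qed
  also have "2 powr p * real M powr (-2*p) * (\<Sum>t<M. (1 + real t) powr (-r)) + 2 powr (2*k) * (1 + real M) powr (-2*k) * real M powr (-p) * (\<Sum>t<M. (1 + real t) powr (-p))
    \<le> 2 powr p * real M powr (-2*p) * (real M powr (1 - r) / (1 - r))
       + 2 powr (2*k) * (1 + real M) powr (-2*k) * real M powr (-p) * (real M powr (1 - p) / (1 - p))"
    using powr_sum_bound[of r M] powr_sum_bound[of p M] r p
    by (intro add_mono mult_left_mono) auto
  finally show ?thesis .
qed

lemma NL_nat:
  fixes k s p r :: real and M :: nat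
  assumes r: "0 \<le> r" "r < 1" "r \<le> 2*k" and p: "0 < p" "p < 1" "1 < 2*p"
    and s: "s \<le> 2*k" "2* s - 2*k + 1 - r - 2*p \<le> 0"
  shows "jb (real M) powr (2* s - 2*k) * (\<Sum>t\<le>M. jb (real t) powr (-2*k) * jb ((real M)\<^sup>2 - (real t)\<^sup>2) powr (-p))
     \<le> 2 powr p * 2 powr (r + 2*p - 1) / (1 - r) + 2 powr (2*k) / (1 - p) + 1"
    (is "?L \<le> ?K")
proof (cases "M = 0")
  case True
  have "?L = 1" using True by (simp add: jb_def)
  moreover have "0 \<le> 2 powr p * 2 powr (r + 2*p - 1) / (1 - r) + 2 powr (2*k) / (1 - p)" using r p by simp
  ultimately show ?thesis by linarith
next
  case False
  define m where "m = real M"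
  define J where "J = 1 + m"
  have m1: "m \<ge> 1" using False by (simp add: m_def)
  have jM: "jb (real M) = J" by (simp add: jb_def J_def m_def)
  have J1: "J \<ge> 1" using m1 by (simp add: J_def)
  have sum_split: "(\<Sum>t\<le>M. jb (real t) powr (-2*k) * jb ((real M)\<^sup>2 - (real t)\<^sup>2) powr (-p))
     = (\<Sum>t<M. jb (real t) powr (-2*k) * jb ((real M)\<^sup>2 - (real t)\<^sup>2) powr (-p)) + J powr (-2*k)"
    by (simp add: lessThan_Suc_atMost[symmetric] jM jb_def J_def m_def)
  define e where "e = 1 - r - 2*p"
  have e0: "e \<le> 0" using r p by (simp add: e_def)
  have T1: "J powr (2* s - 2*k) * (2 powr p * m powr (-2*p) * (m powr (1 - r) / (1 - r)))
      \<le> 2 powr p * 2 powr (r + 2*p - 1) / (1 - r)"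
  proof -
    have "m powr (-2*p) * m powr (1 - r) = m powr e" using m1 by (simp add: e_def powr_add[symmetric])
    also have "\<dots> \<le> (J / 2) powr e" using m1 e0 by (intro powr_mono2') (auto simp: J_def)
    also have "\<dots> = 2 powr (r + 2*p - 1) * J powr e" using J1
      by (simp add: powr_divide e_def powr_minus_divide divide_simps powr_diff powr_add)
    finally have A: "m powr (-2*p) * m powr (1 - r) \<le> 2 powr (r + 2*p - 1) * J powr e" .
    have B: "J powr (2* s - 2*k) * J powr e \<le> 1"
      using J1 s by (simp add: powr_add[symmetric] e_def) (rule powr_le1'[OF _ J1]; linarith)
    have "J powr (2* s - 2*k) * (2 powr p * m powr (-2*p) * (m powr (1 - r) / (1 - r)))
       = 2 powr p / (1 - r) * (J powr (2* s - 2*k) * (m powr (-2*p) * m powr (1 - r)))" by simp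
    also have "\<dots> \<le> 2 powr p / (1 - r) * (J powr (2* s - 2*k) * (2 powr (r + 2*p - 1) * J powr e))"
      using A r by (intro mult_left_mono) auto
    also have "\<dots> = 2 powr p / (1 - r) * 2 powr (r + 2*p - 1) * (J powr (2* s - 2*k) * J powr e)" by simp
    also have "\<dots> \<le> 2 powr p / (1 - r) * 2 powr (r + 2*p - 1) * 1"
      using B r by (intro mult_left_mono) auto
    finally show ?thesis by simp
  qed
  have T2: "J powr (2* s - 2*k) * (2 powr (2*k) * J powr (-2*k) * m powr (-p) * (m powr (1 - p) / (1 - p)))
      \<le> 2 powr (2*k) / (1 - p)"
  proof -
    have A: "J powr (2* s - 2*k) * J powr (-2*k) \<le> 1"
      using J1 s by (simp add: powr_add[symmetric]) (rule powr_le1'[OF _ J1]; linarith)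
    have B: "m powr (-p) * m powr (1 - p) \<le> 1"
      using m1 p by (simp add: powr_add[symmetric]) (rule powr_le1'[OF _ m1]; linarith)
    have "J powr (2* s - 2*k) * (2 powr (2*k) * J powr (-2*k) * m powr (-p) * (m powr (1 - p) / (1 - p)))
      = 2 powr (2*k) / (1 - p) * ((J powr (2* s - 2*k) * J powr (-2*k)) * (m powr (-p) * m powr (1 - p)))" by simp
    also have "\<dots> \<le> 2 powr (2*k) / (1 - p) * (1 * 1)"
      using A B p by (intro mult_left_mono mult_mono) auto
    finally show ?thesis by simp
  qed
  have T3: "J powr (2* s - 2*k) * J powr (-2*k) \<le> 1"
    using J1 s by (simp add: powr_add[symmetric]) (rule powr_le1'[OF _ J1]; linarith)
  have "?L = J powr (2* s - 2*k) * (\<Sum>t<M. jb (real t) powr (-2*k) * jb ((real M)\<^sup>2 - (real t)\<^sup>2) powr (-p)) + J powr (2* s - 2*k) * J powr (-2*k)"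
    unfolding sum_split jM distrib_left by simp
  also have "\<dots> \<le> J powr (2* s - 2*k) * (2 powr p * m powr (-2*p) * (m powr (1 - r) / (1 - r))
       + 2 powr (2*k) * J powr (-2*k) * m powr (-p) * (m powr (1 - p) / (1 - p))) + 1"
    using NL_sum[OF r p(1,2), of M] T3 by (intro add_mono mult_left_mono) (auto simp: m_def J_def)
  also have "\<dots> \<le> ?K" using T1 T2 by (simp add: distrib_left)
  finally show ?thesis .
qed

lemma sym_sum_le:
  fixes \<psi> :: "int \<Rightarrow> real" and M :: nat
  assumes nn: "\<And>a. \<psi> a \<ge> 0" and sym: "\<And>a. \<psi> (- a) = \<psi> a"
  shows "(\<Sum>a\<in>{- int M..int M}. \<psi> a) \<le> 2 * (\<Sum>t\<le>M. \<psi> (int t))"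
proof -
  define g where "g = (\<lambda>x::nat \<times> int. snd x * int (fst x))"
  define I where "I = {..M} \<times> {-1, 1::int}"
  have fin: "finite I" by (simp add: I_def)
  have sub: "{- int M..int M} \<subseteq> g ` I"
  proof
    fix a assume a: "a \<in> {- int M..int M}"
    show "a \<in> g ` I"
    proof (cases "a \<ge> 0")
      case True
      then have "a = g (nat a, 1)" by (simp add: g_def)
      moreover have "(nat a, 1) \<in> I" using a True by (auto simp: I_def)
      ultimately show ?thesis by blast
    next
      case False
      then have "a = g (nat (-a), -1)" by (simp add: g_def)
      moreover have "(nat (-a), -1) \<in> I" using a False by (auto simp: I_def)
      ultimately show ?thesis by blast
    qed
  qed
  have "(\<Sum>a\<in>{- int M..int M}. \<psi> a) \<le> (\<Sum>a\<in>g ` I. \<psi> a)"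
    using sub fin nn by (intro sum_mono2) auto
  also have "\<dots> \<le> (\<Sum>x\<in>I. \<psi> (g x))"
    using sum_image_le[OF fin, of \<psi> g] nn by (simp add: o_def)
  also have "\<dots> = (\<Sum>t\<le>M. \<Sum>e\<in>{-1, 1::int}. \<psi> (e * int t))"
    unfolding I_def g_def sum.cartesian_product' by simp
  also have "\<dots> = (\<Sum>t\<le>M. 2 * \<psi> (int t))"
    by (intro sum.cong refl) (simp add: sym)
  finally show ?thesis by (simp add: sum_distrib_left)
qed

lemma NL_int:
  fixes k s p r :: real and N :: int
  assumes r: "0 \<le> r" "r < 1" "r \<le> 2*k" and p: "0 < p" "p < 1" "1 < 2*p"
    and s: "s \<le> 2*k" "2 * s - 2*k + 1 - r - 2*p \<le> 0"
  shows "jb (real_of_int N) powr (2 * s - 2*k) * (\<Sum>a\<in>{-\<bar>N\<bar>..\<bar>N\<bar>}. jb (real_of_int a) powr (-2*k) * jb ((real_of_int N)\<^sup>2 - (real_of_int a)\<^sup>2) powr (-p))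
     \<le> 2 * (2 powr p * 2 powr (r + 2*p - 1) / (1 - r) + 2 powr (2*k) / (1 - p) + 1)"
proof -
  define M where "M = nat \<bar>N\<bar>"
  have NM: "\<bar>N\<bar> = int M" by (simp add: M_def)
  have jN: "jb (real_of_int N) = jb (real M)" by (simp add: jb_def M_def)
  have N2: "(real_of_int N)\<^sup>2 = (real M)\<^sup>2" by (simp add: M_def)
  define \<psi> where "\<psi> = (\<lambda>a::int. jb (real_of_int a) powr (-2*k) * jb ((real M)\<^sup>2 - (real_of_int a)\<^sup>2) powr (-p))"
  have "(\<Sum>a\<in>{-\<bar>N\<bar>..\<bar>N\<bar>}. jb (real_of_int a) powr (-2*k) * jb ((real_of_int N)\<^sup>2 - (real_of_int a)\<^sup>2) powr (-p))
     = (\<Sum>a\<in>{- int M..int M}. \<psi> a)" by (simp add: NM N2 \<psi>_def)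
  also have "\<dots> \<le> 2 * (\<Sum>t\<le>M. \<psi> (int t))"
    by (rule sym_sum_le) (auto simp: \<psi>_def jb_minus[of "real_of_int _", symmetric])
  finally have A: "(\<Sum>a\<in>{-\<bar>N\<bar>..\<bar>N\<bar>}. jb (real_of_int a) powr (-2*k) * jb ((real_of_int N)\<^sup>2 - (real_of_int a)\<^sup>2) powr (-p))
     \<le> 2 * (\<Sum>t\<le>M. jb (real t) powr (-2*k) * jb ((real M)\<^sup>2 - (real t)\<^sup>2) powr (-p))"
    by (simp add: \<psi>_def)
  have "jb (real_of_int N) powr (2 * s - 2*k) * (\<Sum>a\<in>{-\<bar>N\<bar>..\<bar>N\<bar>}. jb (real_of_int a) powr (-2*k) * jb ((real_of_int N)\<^sup>2 - (real_of_int a)\<^sup>2) powr (-p))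
     \<le> jb (real M) powr (2 * s - 2*k) * (2 * (\<Sum>t\<le>M. jb (real t) powr (-2*k) * jb ((real M)\<^sup>2 - (real t)\<^sup>2) powr (-p)))"
    unfolding jN by (rule mult_left_mono[OF A]) simp
  also have "\<dots> \<le> 2 * (2 powr p * 2 powr (r + 2*p - 1) / (1 - r) + 2 powr (2*k) / (1 - p) + 1)"
    using NL_nat[OF r p s, of M] by simp
  finally show ?thesis .
qed

lemma nn_translate:
  fixes f :: "real \<Rightarrow> ennreal"
  assumes [measurable]: "f \<in> borel_measurable borel"
  shows "(\<integral>\<^sup>+x. f (x + c) \<partial>lborel) = (\<integral>\<^sup>+x. f x \<partial>lborel)"
  using nn_integral_real_affine[of f 1 c] by (simp add: add.commute)

lemma nn_reflect:
  fixes f :: "real \<Rightarrow> ennreal"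
  assumes [measurable]: "f \<in> borel_measurable borel"
  shows "(\<integral>\<^sup>+x. f (c - x) \<partial>lborel) = (\<integral>\<^sup>+x. f x \<partial>lborel)"
  using nn_integral_real_affine[of f "-1" c] by simp

lemma Iq_bound:
  fixes q c :: real assumes q: "q > 1"
  shows "(\<integral>\<^sup>+x. ennreal (jb (x + c) powr (-q)) \<partial>lborel) \<le> ennreal (2 / (q - 1))"
proof -
  define g where "g = (\<lambda>y::real. if y \<in> {1..} then y powr (-q) else 0)"
  have gm[measurable]: "g \<in> borel_measurable borel" unfolding g_def by measurable
  have "((\<lambda>y. y powr (-q)) has_integral (- (1 powr (-q + 1)) / (-q + 1))) {1..}"
    using q by (intro has_integral_powr_to_inf) auto
  then have "(g has_integral (1 / (q - 1))) UNIV"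
  proof -
    have "- (1 powr (-q + 1)) / (-q + 1) = 1 / (q - 1)" using q by (simp add: divide_simps)
    with \<open>((\<lambda>y. y powr (-q)) has_integral (- (1 powr (-q + 1)) / (-q + 1))) {1..}\<close>
    show ?thesis unfolding g_def has_integral_restrict_UNIV by simp
  qed
  then have gi: "(\<integral>\<^sup>+y. ennreal (g y) \<partial>lborel) = ennreal (1 / (q - 1))"
    by (intro nn_integral_has_integral_lborel) (auto simp: g_def)
  have "(\<integral>\<^sup>+x. ennreal (jb (x + c) powr (-q)) \<partial>lborel) = (\<integral>\<^sup>+x. ennreal (jb x powr (-q)) \<partial>lborel)"
    by (rule nn_translate[where f="\<lambda>x. ennreal (jb x powr (-q))"]) measurable
  also have "\<dots> \<le> (\<integral>\<^sup>+x. ennreal (g (1 + x)) + ennreal (g (1 - x)) \<partial>lborel)"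
  proof (intro nn_integral_mono)
    fix x :: real
    show "ennreal (jb x powr (-q)) \<le> ennreal (g (1 + x)) + ennreal (g (1 - x))"
    proof (cases "x \<ge> 0")
      case True
      then have "g (1 + x) = jb x powr (-q)" by (simp add: g_def jb_def add.commute)
      then show ?thesis by simp
    next
      case False
      then have "g (1 - x) = jb x powr (-q)" by (simp add: g_def jb_def)
      then show ?thesis by simp
    qed
  qed
  also have "\<dots> = (\<integral>\<^sup>+x. ennreal (g (1 + x)) \<partial>lborel) + (\<integral>\<^sup>+x. ennreal (g (1 - x)) \<partial>lborel)"
    by (rule nn_integral_add) auto
  also have "(\<integral>\<^sup>+x. ennreal (g (1 + x)) \<partial>lborel) = (\<integral>\<^sup>+x. ennreal (g x) \<partial>lborel)"
    using nn_translate[where f="\<lambda>x. ennreal (g x)" and c=1] by (simp add: add.commute)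
  also have "(\<integral>\<^sup>+x. ennreal (g (1 - x)) \<partial>lborel) = (\<integral>\<^sup>+x. ennreal (g x) \<partial>lborel)"
    using nn_reflect[where f="\<lambda>x. ennreal (g x)" and c=1] by simp
  finally show ?thesis using gi q by (simp add: ennreal_plus[symmetric] del: ennreal_plus)
qed

lemma conv_point:
  fixes p q u v :: real assumes pq: "0 \<le> p" "p \<le> q"
  shows "jb u powr (-p) * jb v powr (-q) \<le> 2 powr q * jb (u - v) powr (-p) * (jb u powr (-q) + jb v powr (-q))"
proof (cases "2 * \<bar>u\<bar> \<ge> \<bar>u - v\<bar>")
  case True
  have "jb (u - v) \<le> 2 * jb u" using True by (simp add: jb_def)
  then have "jb u powr (-p) \<le> (jb (u - v) / 2) powr (-p)"
    using pq by (intro powr_mono2') (auto simp: jb_pos)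
  also have "\<dots> = 2 powr p * jb (u - v) powr (-p)"
    by (simp add: powr_divide powr_minus_divide divide_simps jb_pos)
  also have "\<dots> \<le> 2 powr q * jb (u - v) powr (-p)"
    using pq by (intro mult_right_mono powr_mono) auto
  finally have "jb u powr (-p) * jb v powr (-q) \<le> 2 powr q * jb (u - v) powr (-p) * jb v powr (-q)"
    by (intro mult_right_mono) auto
  also have "\<dots> \<le> 2 powr q * jb (u - v) powr (-p) * (jb u powr (-q) + jb v powr (-q))"
    by (intro mult_left_mono) auto
  finally show ?thesis .
next
  case False
  have "jb (u - v) \<le> 2 * jb v" using False by (simp add: jb_def)
  then have "jb v powr (-q) \<le> (jb (u - v) / 2) powr (-q)"
    using pq by (intro powr_mono2') (auto simp: jb_pos)
  also have "\<dots> = 2 powr q * jb (u - v) powr (-q)"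
    by (simp add: powr_divide powr_minus_divide divide_simps jb_pos)
  finally have A: "jb v powr (-q) \<le> 2 powr q * jb (u - v) powr (-q)" .
  have "jb u \<le> jb (u - v)" using False by (simp add: jb_def)
  then have B: "jb (u - v) powr (-(q - p)) \<le> jb u powr (-(q - p))"
    using pq by (intro powr_mono2') (auto simp: jb_pos)
  have "jb u powr (-p) * jb v powr (-q) \<le> jb u powr (-p) * (2 powr q * jb (u - v) powr (-q))"
    using A by (intro mult_left_mono) auto
  also have "\<dots> = 2 powr q * jb (u - v) powr (-p) * (jb u powr (-p) * jb (u - v) powr (-(q - p)))"
    by (simp add: powr_add[symmetric] mult_ac)
  also have "\<dots> \<le> 2 powr q * jb (u - v) powr (-p) * (jb u powr (-p) * jb u powr (-(q - p)))"
    using B by (intro mult_left_mono) auto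
  also have "\<dots> = 2 powr q * jb (u - v) powr (-p) * jb u powr (-q)"
    by (simp add: powr_add[symmetric])
  also have "\<dots> \<le> 2 powr q * jb (u - v) powr (-p) * (jb u powr (-q) + jb v powr (-q))"
    by (intro mult_left_mono) auto
  finally show ?thesis .
qed

lemma conv_int:
  fixes p q A B :: real assumes pq: "0 \<le> p" "p \<le> q" "1 < q"
  shows "(\<integral>\<^sup>+x. ennreal (jb (x + A) powr (-p) * jb (x + B) powr (-q)) \<partial>lborel)
     \<le> ennreal (2 powr q * (4 / (q - 1))) * ennreal (jb (A - B) powr (-p))"
proof -
  have "(\<integral>\<^sup>+x. ennreal (jb (x + A) powr (-p) * jb (x + B) powr (-q)) \<partial>lborel)
     \<le> (\<integral>\<^sup>+x. ennreal (2 powr q * jb (A - B) powr (-p)) * (ennreal (jb (x + A) powr (-q)) + ennreal (jb (x + B) powr (-q))) \<partial>lborel)"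
  proof (intro nn_integral_mono)
    fix x
    have "jb (x + A) powr (-p) * jb (x + B) powr (-q) \<le> 2 powr q * jb (A - B) powr (-p) * (jb (x + A) powr (-q) + jb (x + B) powr (-q))"
      using conv_point[OF pq(1,2), of "x + A" "x + B"] by simp
    then show "ennreal (jb (x + A) powr (-p) * jb (x + B) powr (-q)) \<le> ennreal (2 powr q * jb (A - B) powr (-p)) * (ennreal (jb (x + A) powr (-q)) + ennreal (jb (x + B) powr (-q)))"
      by (simp add: ennreal_mult[symmetric] ennreal_plus[symmetric] del: ennreal_plus)
  qed
  also have "\<dots> = ennreal (2 powr q * jb (A - B) powr (-p)) * ((\<integral>\<^sup>+x. ennreal (jb (x + A) powr (-q)) \<partial>lborel) + (\<integral>\<^sup>+x. ennreal (jb (x + B) powr (-q)) \<partial>lborel))"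
    by (subst nn_integral_cmult) (auto simp: nn_integral_add)
  also have "\<dots> \<le> ennreal (2 powr q * jb (A - B) powr (-p)) * (ennreal (2 / (q - 1)) + ennreal (2 / (q - 1)))"
    using Iq_bound[OF pq(3)] by (intro mult_left_mono add_mono) auto
  also have "\<dots> = ennreal (2 powr q * (4 / (q - 1))) * ennreal (jb (A - B) powr (-p))"
    using pq by (simp add: ennreal_plus[symmetric] ennreal_mult[symmetric] del: ennreal_plus)
  finally show ?thesis .
qed

lemma comb:
  fixes p q x y :: real assumes pq: "0 \<le> p" "p \<le> q"
  shows "jb x powr (-q) * jb y powr (-p) \<le> jb (x - y) powr (-p)"
proof -
  have "jb x powr (-q) \<le> jb x powr (-p)" using pq jb_ge1[of x] by (intro powr_mono) auto
  then have "jb x powr (-q) * jb y powr (-p) \<le> jb x powr (-p) * jb y powr (-p)"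
    by (intro mult_right_mono) auto
  also have "\<dots> = (jb x * jb y) powr (-p)" by (simp add: powr_mult jb_pos)
  also have "\<dots> \<le> jb (x - y) powr (-p)"
  proof -
    have "jb (x - y) \<le> jb x * jb y" using jb_add_le[of x "-y"] by (simp add: jb_minus)
    then show ?thesis using pq by (intro powr_mono2') (auto simp: jb_pos)
  qed
  finally show ?thesis .
qed

lemma jb_powr_2s:
  fixes s x y :: real assumes "0 \<le> s" "\<bar>x\<bar> \<le> 2 * \<bar>y\<bar>"
  shows "jb x powr (2 * s) \<le> 2 powr (2 * s) * jb y powr (2 * s)"
proof -
  have "jb x \<le> 2 * jb y" using assms by (simp add: jb_def)
  then have "jb x powr (2 * s) \<le> (2 * jb y) powr (2 * s)" using assms jb_pos[of x] by (intro powr_mono2) auto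
  then show ?thesis by (simp add: powr_mult jb_pos)
qed

lemma finite_sum_nn:
  fixes h :: "int \<Rightarrow> real" and N :: int
  assumes "\<And>a. h a \<ge> 0"
  shows "(\<integral>\<^sup>+a. ennreal (if \<bar>a\<bar> \<le> \<bar>N\<bar> then h a else 0) \<partial>count_space UNIV) = ennreal (\<Sum>a\<in>{-\<bar>N\<bar>..\<bar>N\<bar>}. h a)"
proof -
  have "(\<integral>\<^sup>+a. ennreal (if \<bar>a\<bar> \<le> \<bar>N\<bar> then h a else 0) \<partial>count_space UNIV)
     = (\<integral>\<^sup>+a. ennreal (h a) * indicator {-\<bar>N\<bar>..\<bar>N\<bar>} a \<partial>count_space UNIV)"
    by (intro nn_integral_cong) (auto simp: indicator_def abs_le_iff)
  also have "\<dots> = (\<integral>\<^sup>+a. ennreal (h a) \<partial>count_space {-\<bar>N\<bar>..\<bar>N\<bar>})"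
    by (simp add: nn_integral_count_space_indicator)
  also have "\<dots> = (\<Sum>a\<in>{-\<bar>N\<bar>..\<bar>N\<bar>}. ennreal (h a))" by (simp add: nn_integral_count_space_finite)
  also have "\<dots> = ennreal (\<Sum>a\<in>{-\<bar>N\<bar>..\<bar>N\<bar>}. h a)" using assms by (simp add: sum_ennreal)
  finally show ?thesis .
qed

definition Kr :: "real \<Rightarrow> real \<Rightarrow> int \<Rightarrow> real \<Rightarrow> int \<Rightarrow> real \<Rightarrow> real" where
  "Kr k q n \<tau> m \<sigma> = jb (of_int (n - m)) powr (-2*k) * jb (\<tau> - \<sigma> + (of_int (n - m))\<^sup>2) powr (-q)
      * jb (of_int m) powr (-2*k) * jb ((of_int m)\<^sup>2 - \<sigma>) powr (-q)"

definition Wt :: "real \<Rightarrow> real \<Rightarrow> int \<Rightarrow> real \<Rightarrow> real" where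
  "Wt s p n \<tau> = jb (of_int n) powr (2 * s) * jb \<tau> powr (-p)"

lemma Kr_nn: "Kr k q n \<tau> m \<sigma> \<ge> 0" by (simp add: Kr_def)
lemma Wt_nn: "Wt s p n \<tau> \<ge> 0" by (simp add: Wt_def)

lemma S3:
  fixes k s p q KN :: real
  assumes s: "0 \<le> s" and pq: "0 \<le> p" "p \<le> q" "1 < q"
    and NLb: "\<And>N::int. jb (of_int N) powr (2 * s - 2*k) * (\<Sum>a\<in>{-\<bar>N\<bar>..\<bar>N\<bar>}. jb (of_int a) powr (-2*k) * jb ((of_int N)\<^sup>2 - (of_int a)\<^sup>2) powr (-p)) \<le> KN"
  shows "(\<integral>\<^sup>+n. \<integral>\<^sup>+\<tau>. ennreal (if \<bar>n - m\<bar> \<le> \<bar>m\<bar> then Wt s p n \<tau> * Kr k q n \<tau> m \<sigma> else 0) \<partial>lborel \<partial>count_space UNIV)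
     \<le> ennreal (2 powr q * (4 / (q - 1)) * 2 powr (2 * s) * KN)"
proof -
  define Cc where "Cc = 2 powr q * (4 / (q - 1))"
  have Cc0: "Cc \<ge> 0" using pq by (simp add: Cc_def)
  define h where "h = (\<lambda>a::int. jb (of_int m) powr (2 * s - 2*k) * (jb (of_int a) powr (-2*k) * jb ((of_int m)\<^sup>2 - (of_int a)\<^sup>2) powr (-p)))"
  have h0: "h a \<ge> 0" for a by (simp add: h_def)
  have inner: "(\<integral>\<^sup>+\<tau>. ennreal (if \<bar>n - m\<bar> \<le> \<bar>m\<bar> then Wt s p n \<tau> * Kr k q n \<tau> m \<sigma> else 0) \<partial>lborel)
      \<le> ennreal (Cc * 2 powr (2 * s)) * ennreal (if \<bar>n - m\<bar> \<le> \<bar>m\<bar> then h (n - m) else 0)" for n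
  proof (cases "\<bar>n - m\<bar> \<le> \<bar>m\<bar>")
    case False then show ?thesis by simp
  next
    case R: True
    define c where "c = jb (of_int n) powr (2 * s) * jb (of_int (n - m)) powr (-2*k) * jb (of_int m) powr (-2*k) * jb ((of_int m)\<^sup>2 - \<sigma>) powr (-q)"
    have c0: "c \<ge> 0" by (simp add: c_def)
    define B where "B = - \<sigma> + (of_int (n - m))\<^sup>2"
    have "(\<integral>\<^sup>+\<tau>. ennreal (if \<bar>n - m\<bar> \<le> \<bar>m\<bar> then Wt s p n \<tau> * Kr k q n \<tau> m \<sigma> else 0) \<partial>lborel)
        = (\<integral>\<^sup>+\<tau>. ennreal c * ennreal (jb (\<tau> + 0) powr (-p) * jb (\<tau> + B) powr (-q)) \<partial>lborel)"
    proof (intro nn_integral_cong)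
      fix x :: real
      have e: "x - \<sigma> + (of_int (n - m))\<^sup>2 = x + B" by (simp add: B_def)
      show "ennreal (if \<bar>n - m\<bar> \<le> \<bar>m\<bar> then Wt s p n x * Kr k q n x m \<sigma> else 0) = ennreal c * ennreal (jb (x + 0) powr (-p) * jb (x + B) powr (-q))"
        using R c0 unfolding Wt_def Kr_def c_def e by (simp add: ennreal_mult[symmetric] mult_ac)
    qed
    also have "\<dots> = ennreal c * (\<integral>\<^sup>+\<tau>. ennreal (jb (\<tau> + 0) powr (-p) * jb (\<tau> + B) powr (-q)) \<partial>lborel)"
      by (rule nn_integral_cmult) measurable
    also have "\<dots> \<le> ennreal c * (ennreal Cc * ennreal (jb (0 - B) powr (-p)))"
      using conv_int[OF pq, of 0 B] by (intro mult_left_mono) (auto simp: Cc_def)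
    also have "\<dots> = ennreal (Cc * (c * jb (0 - B) powr (-p)))"
      using c0 Cc0 by (simp add: ennreal_mult[symmetric] mult_ac)
    also have "\<dots> \<le> ennreal (Cc * (2 powr (2 * s) * h (n - m)))"
    proof -
      have 1: "jb ((of_int m)\<^sup>2 - \<sigma>) powr (-q) * jb (0 - B) powr (-p) \<le> jb ((of_int m)\<^sup>2 - (of_int (n - m))\<^sup>2) powr (-p)"
        using comb[OF pq(1,2), of "(of_int m)\<^sup>2 - \<sigma>" "- (0 - B)"] by (simp add: jb_minus B_def jb_diff_commute[of \<sigma>])
      have 2: "jb (of_int n) powr (2 * s) \<le> 2 powr (2 * s) * jb (of_int m) powr (2 * s)"
      proof (intro jb_powr_2s[OF s])
        have "\<bar>n\<bar> \<le> 2 * \<bar>m\<bar>" using R by linarith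
        then have "real_of_int \<bar>n\<bar> \<le> real_of_int (2 * \<bar>m\<bar>)" by (simp only: of_int_le_iff)
        then show "\<bar>real_of_int n\<bar> \<le> 2 * \<bar>real_of_int m\<bar>" by simp
      qed
      have "c * jb (0 - B) powr (-p) = jb (of_int n) powr (2 * s) * jb (of_int (n - m)) powr (-2*k) * jb (of_int m) powr (-2*k) * (jb ((of_int m)\<^sup>2 - \<sigma>) powr (-q) * jb (0 - B) powr (-p))"
        by (simp add: c_def mult_ac)
      also have "\<dots> \<le> (2 powr (2 * s) * jb (of_int m) powr (2 * s)) * jb (of_int (n - m)) powr (-2*k) * jb (of_int m) powr (-2*k) * jb ((of_int m)\<^sup>2 - (of_int (n - m))\<^sup>2) powr (-p)"
        using 1 2 by (intro mult_mono) auto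
      also have "\<dots> = 2 powr (2 * s) * h (n - m)"
        by (simp add: h_def powr_add[symmetric] mult_ac jb_pos)
      finally show ?thesis using Cc0 by (intro ennreal_leI mult_left_mono) auto
    qed
    also have "\<dots> = ennreal (Cc * 2 powr (2 * s)) * ennreal (if \<bar>n - m\<bar> \<le> \<bar>m\<bar> then h (n - m) else 0)"
      using R Cc0 h0 by (simp add: ennreal_mult[symmetric] mult_ac)
    finally show ?thesis .
  qed
  have "(\<integral>\<^sup>+n. \<integral>\<^sup>+\<tau>. ennreal (if \<bar>n - m\<bar> \<le> \<bar>m\<bar> then Wt s p n \<tau> * Kr k q n \<tau> m \<sigma> else 0) \<partial>lborel \<partial>count_space UNIV)
     \<le> (\<integral>\<^sup>+n. ennreal (Cc * 2 powr (2 * s)) * ennreal (if \<bar>n - m\<bar> \<le> \<bar>m\<bar> then h (n - m) else 0) \<partial>count_space UNIV)"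
    by (intro nn_integral_mono inner)
  also have "\<dots> = ennreal (Cc * 2 powr (2 * s)) * (\<integral>\<^sup>+n. ennreal (if \<bar>n - m\<bar> \<le> \<bar>m\<bar> then h (n - m) else 0) \<partial>count_space UNIV)"
    by (rule nn_integral_cmult) simp
  also have "(\<integral>\<^sup>+n. ennreal (if \<bar>n - m\<bar> \<le> \<bar>m\<bar> then h (n - m) else 0) \<partial>count_space UNIV)
      = (\<integral>\<^sup>+a. ennreal (if \<bar>a\<bar> \<le> \<bar>m\<bar> then h a else 0) \<partial>count_space UNIV)"
  proof -
    have "bij_betw (\<lambda>n. n - m) UNIV UNIV"
      by (rule bij_betwI[where g="\<lambda>a. a + m"]) auto
    from nn_integral_bij_count_space[OF this, of "\<lambda>a. ennreal (if \<bar>a\<bar> \<le> \<bar>m\<bar> then h a else 0)"]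
    show ?thesis by simp
  qed
  also have "\<dots> = ennreal (\<Sum>a\<in>{-\<bar>m\<bar>..\<bar>m\<bar>}. h a)" by (rule finite_sum_nn) (rule h0)
  also have "(\<Sum>a\<in>{-\<bar>m\<bar>..\<bar>m\<bar>}. h a) \<le> KN"
    using NLb[of m] by (simp add: h_def sum_distrib_left)
  then have "ennreal (Cc * 2 powr (2 * s)) * ennreal (\<Sum>a\<in>{-\<bar>m\<bar>..\<bar>m\<bar>}. h a) \<le> ennreal (Cc * 2 powr (2 * s)) * ennreal KN"
    by (intro mult_left_mono ennreal_leI) auto
  also have "\<dots> = ennreal (Cc * 2 powr (2 * s) * KN)"
  proof -
    have "0 \<le> jb (of_int (0::int)) powr (2 * s - 2*k) * (\<Sum>a\<in>{-\<bar>0::int\<bar>..\<bar>0\<bar>}. jb (of_int a) powr (-2*k) * jb ((of_int (0::int))\<^sup>2 - (of_int a)\<^sup>2) powr (-p))"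
      by (intro mult_nonneg_nonneg sum_nonneg) auto
    then have "0 \<le> KN" using NLb[of 0] by linarith
    then show ?thesis using Cc0 by (simp add: ennreal_mult[symmetric])
  qed
  finally show ?thesis by (simp add: Cc_def)
qed

lemma S2:
  fixes k s p q KN :: real
  assumes s: "0 \<le> s" and pq: "0 \<le> p" "p \<le> q" "1 < q"
    and NLb: "\<And>N::int. jb (of_int N) powr (2 * s - 2*k) * (\<Sum>a\<in>{-\<bar>N\<bar>..\<bar>N\<bar>}. jb (of_int a) powr (-2*k) * jb ((of_int N)\<^sup>2 - (of_int a)\<^sup>2) powr (-p)) \<le> KN"
  shows "(\<integral>\<^sup>+m. \<integral>\<^sup>+\<sigma>. ennreal (if \<bar>m\<bar> < \<bar>a\<bar> then Wt s p (a + m) (\<alpha> + \<sigma>) * Kr k q (a + m) (\<alpha> + \<sigma>) m \<sigma> else 0) \<partial>lborel \<partial>count_space UNIV)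
     \<le> ennreal (2 powr q * (4 / (q - 1)) * 2 powr (2 * s) * KN)"
proof -
  define Cc where "Cc = 2 powr q * (4 / (q - 1))"
  have Cc0: "Cc \<ge> 0" using pq by (simp add: Cc_def)
  define h where "h = (\<lambda>m::int. jb (of_int a) powr (2 * s - 2*k) * (jb (of_int m) powr (-2*k) * jb ((of_int a)\<^sup>2 - (of_int m)\<^sup>2) powr (-p)))"
  have h0: "h m \<ge> 0" for m by (simp add: h_def)
  have inner: "(\<integral>\<^sup>+\<sigma>. ennreal (if \<bar>m\<bar> < \<bar>a\<bar> then Wt s p (a + m) (\<alpha> + \<sigma>) * Kr k q (a + m) (\<alpha> + \<sigma>) m \<sigma> else 0) \<partial>lborel)
      \<le> ennreal (Cc * 2 powr (2 * s)) * ennreal (if \<bar>m\<bar> \<le> \<bar>a\<bar> then h m else 0)" for m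
  proof (cases "\<bar>m\<bar> < \<bar>a\<bar>")
    case False then show ?thesis by simp
  next
    case R: True
    define c where "c = jb (of_int (a + m)) powr (2 * s) * jb (of_int a) powr (-2*k) * jb (\<alpha> + (of_int a)\<^sup>2) powr (-q) * jb (of_int m) powr (-2*k)"
    have c0: "c \<ge> 0" by (simp add: c_def)
    define B where "B = - (real_of_int m)\<^sup>2"
    have "(\<integral>\<^sup>+\<sigma>. ennreal (if \<bar>m\<bar> < \<bar>a\<bar> then Wt s p (a + m) (\<alpha> + \<sigma>) * Kr k q (a + m) (\<alpha> + \<sigma>) m \<sigma> else 0) \<partial>lborel)
        = (\<integral>\<^sup>+\<sigma>. ennreal c * ennreal (jb (\<sigma> + \<alpha>) powr (-p) * jb (\<sigma> + B) powr (-q)) \<partial>lborel)"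
    proof (intro nn_integral_cong)
      fix x :: real
      have e: "jb ((of_int m)\<^sup>2 - x) = jb (x + B)" by (simp add: B_def jb_diff_commute[of _ x])
      have e2: "\<alpha> + x - x + (of_int (a + m - m))\<^sup>2 = \<alpha> + (of_int a)\<^sup>2" by simp
      show "ennreal (if \<bar>m\<bar> < \<bar>a\<bar> then Wt s p (a + m) (\<alpha> + x) * Kr k q (a + m) (\<alpha> + x) m x else 0) = ennreal c * ennreal (jb (x + \<alpha>) powr (-p) * jb (x + B) powr (-q))"
        using R c0 unfolding Wt_def Kr_def c_def e e2 by (simp add: ennreal_mult[symmetric] mult_ac add.commute)
    qed
    also have "\<dots> = ennreal c * (\<integral>\<^sup>+\<sigma>. ennreal (jb (\<sigma> + \<alpha>) powr (-p) * jb (\<sigma> + B) powr (-q)) \<partial>lborel)"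
      by (rule nn_integral_cmult) measurable
    also have "\<dots> \<le> ennreal c * (ennreal Cc * ennreal (jb (\<alpha> - B) powr (-p)))"
      using conv_int[OF pq, of \<alpha> B] by (intro mult_left_mono) (auto simp: Cc_def)
    also have "\<dots> = ennreal (Cc * (c * jb (\<alpha> - B) powr (-p)))"
      using c0 Cc0 by (simp add: ennreal_mult[symmetric] mult_ac)
    also have "\<dots> \<le> ennreal (Cc * (2 powr (2 * s) * h m))"
    proof -
      have 1: "jb (\<alpha> + (of_int a)\<^sup>2) powr (-q) * jb (\<alpha> - B) powr (-p) \<le> jb ((of_int a)\<^sup>2 - (of_int m)\<^sup>2) powr (-p)"
        using comb[OF pq(1,2), of "\<alpha> + (of_int a)\<^sup>2" "\<alpha> - B"] by (simp add: B_def)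
      have 2: "jb (of_int (a + m)) powr (2 * s) \<le> 2 powr (2 * s) * jb (of_int a) powr (2 * s)"
      proof (intro jb_powr_2s[OF s])
        have "\<bar>a + m\<bar> \<le> 2 * \<bar>a\<bar>" using R by linarith
        then have "real_of_int \<bar>a + m\<bar> \<le> real_of_int (2 * \<bar>a\<bar>)" by (simp only: of_int_le_iff)
        then show "\<bar>real_of_int (a + m)\<bar> \<le> 2 * \<bar>real_of_int a\<bar>" by simp
      qed
      have "c * jb (\<alpha> - B) powr (-p) = jb (of_int (a + m)) powr (2 * s) * jb (of_int a) powr (-2*k) * jb (of_int m) powr (-2*k) * (jb (\<alpha> + (of_int a)\<^sup>2) powr (-q) * jb (\<alpha> - B) powr (-p))"
        by (simp add: c_def mult_ac)
      also have "\<dots> \<le> (2 powr (2 * s) * jb (of_int a) powr (2 * s)) * jb (of_int a) powr (-2*k) * jb (of_int m) powr (-2*k) * jb ((of_int a)\<^sup>2 - (of_int m)\<^sup>2) powr (-p)"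
        using 1 2 by (intro mult_mono) auto
      also have "\<dots> = 2 powr (2 * s) * h m"
        by (simp add: h_def powr_add[symmetric] mult_ac jb_pos)
      finally show ?thesis using Cc0 by (intro ennreal_leI mult_left_mono) auto
    qed
    also have "\<dots> = ennreal (Cc * 2 powr (2 * s)) * ennreal (if \<bar>m\<bar> \<le> \<bar>a\<bar> then h m else 0)"
      using R Cc0 h0 by (simp add: ennreal_mult[symmetric] mult_ac)
    finally show ?thesis .
  qed
  have "(\<integral>\<^sup>+m. \<integral>\<^sup>+\<sigma>. ennreal (if \<bar>m\<bar> < \<bar>a\<bar> then Wt s p (a + m) (\<alpha> + \<sigma>) * Kr k q (a + m) (\<alpha> + \<sigma>) m \<sigma> else 0) \<partial>lborel \<partial>count_space UNIV)
     \<le> (\<integral>\<^sup>+m. ennreal (Cc * 2 powr (2 * s)) * ennreal (if \<bar>m\<bar> \<le> \<bar>a\<bar> then h m else 0) \<partial>count_space UNIV)"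
    by (intro nn_integral_mono inner)
  also have "\<dots> = ennreal (Cc * 2 powr (2 * s)) * (\<integral>\<^sup>+m. ennreal (if \<bar>m\<bar> \<le> \<bar>a\<bar> then h m else 0) \<partial>count_space UNIV)"
    by (rule nn_integral_cmult) simp
  also have "(\<integral>\<^sup>+m. ennreal (if \<bar>m\<bar> \<le> \<bar>a\<bar> then h m else 0) \<partial>count_space UNIV) = ennreal (\<Sum>m\<in>{-\<bar>a\<bar>..\<bar>a\<bar>}. h m)"
    by (rule finite_sum_nn) (rule h0)
  also have "(\<Sum>m\<in>{-\<bar>a\<bar>..\<bar>a\<bar>}. h m) \<le> KN"
    using NLb[of a] by (simp add: h_def sum_distrib_left)
  then have "ennreal (Cc * 2 powr (2 * s)) * ennreal (\<Sum>m\<in>{-\<bar>a\<bar>..\<bar>a\<bar>}. h m) \<le> ennreal (Cc * 2 powr (2 * s)) * ennreal KN"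
    by (intro mult_left_mono ennreal_leI) auto
  also have "\<dots> = ennreal (Cc * 2 powr (2 * s) * KN)"
  proof -
    have "0 \<le> jb (of_int (0::int)) powr (2 * s - 2*k) * (\<Sum>a\<in>{-\<bar>0::int\<bar>..\<bar>0\<bar>}. jb (of_int a) powr (-2*k) * jb ((of_int (0::int))\<^sup>2 - (of_int a)\<^sup>2) powr (-p))"
      by (intro mult_nonneg_nonneg sum_nonneg) auto
    then have "0 \<le> KN" using NLb[of 0] by linarith
    then show ?thesis using Cc0 by (simp add: ennreal_mult[symmetric])
  qed
  finally show ?thesis by (simp add: Cc_def)
qed

definition fF :: "real \<Rightarrow> real \<Rightarrow> (int \<Rightarrow> real \<Rightarrow> complex) \<Rightarrow> int \<Rightarrow> real \<Rightarrow> real" where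
  "fF k b F a \<alpha> = jb (of_int a) powr k * jb (\<alpha> + (of_int a)\<^sup>2) powr b * cmod (F a \<alpha>)"

definition gG :: "real \<Rightarrow> real \<Rightarrow> (int \<Rightarrow> real \<Rightarrow> complex) \<Rightarrow> int \<Rightarrow> real \<Rightarrow> real" where
  "gG k b G m \<sigma> = jb (of_int m) powr k * jb ((of_int m)\<^sup>2 - \<sigma>) powr b * cmod (G (- m) (- \<sigma>))"

definition K0 :: "real \<Rightarrow> real \<Rightarrow> int \<Rightarrow> real \<Rightarrow> int \<Rightarrow> real \<Rightarrow> real" where
  "K0 k b n \<tau> m \<sigma> = jb (of_int (n - m)) powr (-k) * jb (\<tau> - \<sigma> + (of_int (n - m))\<^sup>2) powr (-b)
      * jb (of_int m) powr (-k) * jb ((of_int m)\<^sup>2 - \<sigma>) powr (-b)"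

lemma fF_nn: "fF k b F a \<alpha> \<ge> 0" by (simp add: fF_def)
lemma gG_nn: "gG k b G a \<alpha> \<ge> 0" by (simp add: gG_def)
lemma K0_nn: "K0 k b n \<tau> m \<sigma> \<ge> 0" by (simp add: K0_def)

lemma jb_powr_cancel: "jb x powr a * jb x powr (-a) = 1"
proof -
  have "jb x \<noteq> 0" using jb_pos[of x] by linarith
  then show ?thesis by (simp add: powr_add[symmetric])
qed

lemma F1: "cmod (F (n - m) (\<tau> - \<sigma>)) * cmod (G (- m) (- \<sigma>)) = fF k b F (n - m) (\<tau> - \<sigma>) * gG k b G m \<sigma> * K0 k b n \<tau> m \<sigma>"
proof -
  have "fF k b F (n - m) (\<tau> - \<sigma>) * gG k b G m \<sigma> * K0 k b n \<tau> m \<sigma>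
    = cmod (F (n - m) (\<tau> - \<sigma>)) * cmod (G (- m) (- \<sigma>)) *
      ((jb (of_int (n - m)) powr k * jb (of_int (n - m)) powr (-k)) * (jb (\<tau> - \<sigma> + (of_int (n - m))\<^sup>2) powr b * jb (\<tau> - \<sigma> + (of_int (n - m))\<^sup>2) powr (-b))
       * (jb (of_int m) powr k * jb (of_int m) powr (-k)) * (jb ((of_int m)\<^sup>2 - \<sigma>) powr b * jb ((of_int m)\<^sup>2 - \<sigma>) powr (-b)))"
    unfolding fF_def gG_def K0_def by (simp add: mult_ac)
  also have "\<dots> = cmod (F (n - m) (\<tau> - \<sigma>)) * cmod (G (- m) (- \<sigma>))"
    by (simp add: jb_powr_cancel)
  finally show ?thesis by simp
qed

lemma jb_powr_sq: "(jb x powr a)\<^sup>2 = jb x powr (2 * a)"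
proof -
  have "jb x \<noteq> 0" using jb_pos[of x] by linarith
  then show ?thesis using powr_power[of "jb x" a 2] by simp
qed

lemma F2: "(K0 k b n \<tau> m \<sigma>)\<^sup>2 = Kr k (2 * b) n \<tau> m \<sigma>"
  unfolding K0_def Kr_def by (simp add: power_mult_distrib jb_powr_sq)

lemma fF_sq: "(fF k b F a \<alpha>)\<^sup>2 = jb (of_int a) powr (2 * k) * jb (\<alpha> + (of_int a)\<^sup>2) powr (2 * b) * (cmod (F a \<alpha>))\<^sup>2"
  unfolding fF_def by (simp add: power_mult_distrib jb_powr_sq)

lemma gG_sq: "(gG k b G m \<sigma>)\<^sup>2 = jb (of_int m) powr (2 * k) * jb ((of_int m)\<^sup>2 - \<sigma>) powr (2 * b) * (cmod (G (- m) (- \<sigma>)))\<^sup>2"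
  unfolding gG_def by (simp add: power_mult_distrib jb_powr_sq)

lemma meas_fF[measurable]: assumes [measurable]: "F a \<in> borel_measurable lborel"
  shows "(\<lambda>\<alpha>. fF k b F a \<alpha>) \<in> borel_measurable lborel"
  unfolding fF_def by measurable

lemma F3:
  assumes [measurable]: "\<And>n. F n \<in> borel_measurable lborel"
  shows "Xper_sq k b F = (\<integral>\<^sup>+x. ennreal ((fF k b F (fst x) (snd x))\<^sup>2) \<partial>PP)"
proof -
  have "Xper_sq k b F = (\<integral>\<^sup>+a. \<integral>\<^sup>+\<alpha>. ennreal ((fF k b F a \<alpha>)\<^sup>2) \<partial>lborel \<partial>count_space UNIV)"
    by (simp add: Xper_sq_def fF_sq)
  also have "\<dots> = (\<integral>\<^sup>+x. ennreal ((fF k b F (fst x) (snd x))\<^sup>2) \<partial>PP)"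
    by (rule II_PP[where f="\<lambda>m \<sigma>. ennreal ((fF k b F m \<sigma>)\<^sup>2)"], rule meas_PP) (simp add: fF_def)
  finally show ?thesis .
qed

lemma F4:
  assumes [measurable]: "\<And>n. G n \<in> borel_measurable lborel"
  shows "Xper_sq k b G = (\<integral>\<^sup>+x. ennreal ((gG k b G (fst x) (snd x))\<^sup>2) \<partial>PP)"
proof -
  have "Xper_sq k b G = (\<integral>\<^sup>+n. \<integral>\<^sup>+\<tau>. ennreal (jb (of_int n) powr (2 * k) * jb (\<tau> + (of_int n)\<^sup>2) powr (2 * b) * (cmod (G n \<tau>))\<^sup>2) \<partial>lborel \<partial>count_space UNIV)"
    by (simp add: Xper_sq_def)
  also have "\<dots> = (\<integral>\<^sup>+m. \<integral>\<^sup>+\<tau>. ennreal (jb (of_int (- m)) powr (2 * k) * jb (\<tau> + (of_int (- m))\<^sup>2) powr (2 * b) * (cmod (G (- m) \<tau>))\<^sup>2) \<partial>lborel \<partial>count_space UNIV)"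
  proof -
    have "bij_betw (\<lambda>m::int. - m) UNIV UNIV" by (rule bij_betwI[where g="\<lambda>a. - a"]) auto
    from nn_integral_bij_count_space[OF this, of "\<lambda>n. \<integral>\<^sup>+\<tau>. ennreal (jb (of_int n) powr (2 * k) * jb (\<tau> + (of_int n)\<^sup>2) powr (2 * b) * (cmod (G n \<tau>))\<^sup>2) \<partial>lborel"]
    show ?thesis by simp
  qed
  also have "\<dots> = (\<integral>\<^sup>+m. \<integral>\<^sup>+\<sigma>. ennreal ((gG k b G m \<sigma>)\<^sup>2) \<partial>lborel \<partial>count_space UNIV)"
  proof -
    have *: "(\<integral>\<^sup>+\<tau>. ennreal (jb (of_int (- m)) powr (2 * k) * jb (\<tau> + (of_int (- m))\<^sup>2) powr (2 * b) * (cmod (G (- m) \<tau>))\<^sup>2) \<partial>lborel)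
       = (\<integral>\<^sup>+\<sigma>. ennreal ((gG k b G m \<sigma>)\<^sup>2) \<partial>lborel)" for m
    proof -
    have "(\<integral>\<^sup>+\<tau>. ennreal (jb (of_int (- m)) powr (2 * k) * jb (\<tau> + (of_int (- m))\<^sup>2) powr (2 * b) * (cmod (G (- m) \<tau>))\<^sup>2) \<partial>lborel)
       = (\<integral>\<^sup>+\<sigma>. ennreal (jb (of_int (- m)) powr (2 * k) * jb ((0 - \<sigma>) + (of_int (- m))\<^sup>2) powr (2 * b) * (cmod (G (- m) (0 - \<sigma>)))\<^sup>2) \<partial>lborel)"
      by (rule nn_reflect[where f="\<lambda>\<tau>. ennreal (jb (of_int (- m)) powr (2 * k) * jb (\<tau> + (of_int (- m))\<^sup>2) powr (2 * b) * (cmod (G (- m) \<tau>))\<^sup>2)" and c=0, symmetric]) measurable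
    also have "\<dots> = (\<integral>\<^sup>+\<sigma>. ennreal ((gG k b G m \<sigma>)\<^sup>2) \<partial>lborel)"
      unfolding gG_sq by (intro nn_integral_cong) (simp add: jb_minus[of "real_of_int m", symmetric] add.commute)
    finally show "(\<integral>\<^sup>+\<tau>. ennreal (jb (of_int (- m)) powr (2 * k) * jb (\<tau> + (of_int (- m))\<^sup>2) powr (2 * b) * (cmod (G (- m) \<tau>))\<^sup>2) \<partial>lborel)
       = (\<integral>\<^sup>+\<sigma>. ennreal ((gG k b G m \<sigma>)\<^sup>2) \<partial>lborel)" .
    qed
    show ?thesis by (simp only: *)
  qed
  also have "\<dots> = (\<integral>\<^sup>+x. ennreal ((gG k b G (fst x) (snd x))\<^sup>2) \<partial>PP)"
    by (rule II_PP[where f="\<lambda>m \<sigma>. ennreal ((gG k b G m \<sigma>)\<^sup>2)"], rule meas_PP) (simp add: gG_def)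
  finally show ?thesis .
qed

lemma F5:
  assumes [measurable]: "\<And>n. F n \<in> borel_measurable lborel"
  shows "(\<integral>\<^sup>+q. ennreal ((fF k b F (n - fst q) (\<tau> - snd q))\<^sup>2) \<partial>PP) = Xper_sq k b F"
proof -
  have "(\<integral>\<^sup>+q. ennreal ((fF k b F (n - fst q) (\<tau> - snd q))\<^sup>2) \<partial>PP)
      = (\<integral>\<^sup>+m. \<integral>\<^sup>+\<sigma>. ennreal ((fF k b F (n - m) (\<tau> - \<sigma>))\<^sup>2) \<partial>lborel \<partial>count_space UNIV)"
    by (rule II_PP[where f="\<lambda>m \<sigma>. ennreal ((fF k b F (n - m) (\<tau> - \<sigma>))\<^sup>2)", symmetric], rule meas_PP) simp
  also have "\<dots> = (\<integral>\<^sup>+m. \<integral>\<^sup>+\<alpha>. ennreal ((fF k b F (n - m) \<alpha>)\<^sup>2) \<partial>lborel \<partial>count_space UNIV)"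
    by (intro nn_integral_cong nn_reflect[where f="\<lambda>\<alpha>. ennreal ((fF k b F (n - _) \<alpha>)\<^sup>2)"]) measurable
  also have "\<dots> = (\<integral>\<^sup>+a. \<integral>\<^sup>+\<alpha>. ennreal ((fF k b F a \<alpha>)\<^sup>2) \<partial>lborel \<partial>count_space UNIV)"
  proof -
    have "bij_betw (\<lambda>m::int. n - m) UNIV UNIV" by (rule bij_betwI[where g="\<lambda>a. n - a"]) auto
    from nn_integral_bij_count_space[OF this, of "\<lambda>a. \<integral>\<^sup>+\<alpha>. ennreal ((fF k b F a \<alpha>)\<^sup>2) \<partial>lborel"]
    show ?thesis by simp
  qed
  also have "\<dots> = Xper_sq k b F" by (simp add: Xper_sq_def fF_sq)
  finally show ?thesis .
qed

lemma swapPP: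
  fixes \<Phi> :: "int \<times> real \<Rightarrow> int \<times> real \<Rightarrow> ennreal"
  assumes "(\<lambda>z. \<Phi> (fst z) (snd z)) \<in> borel_measurable (PP \<Otimes>\<^sub>M PP)"
  shows "(\<integral>\<^sup>+x. \<integral>\<^sup>+q. \<Phi> x q \<partial>PP \<partial>PP) = (\<integral>\<^sup>+q. \<integral>\<^sup>+x. \<Phi> x q \<partial>PP \<partial>PP)"
  using pair_sigma_finite.Fubini[OF psf_PP assms] by simp

lemma measPP_int:
  fixes \<Phi> :: "int \<times> real \<Rightarrow> int \<times> real \<Rightarrow> ennreal"
  assumes "(\<lambda>z. \<Phi> (fst z) (snd z)) \<in> borel_measurable (PP \<Otimes>\<^sub>M PP)"
  shows "(\<lambda>x. \<integral>\<^sup>+q. \<Phi> x q \<partial>PP) \<in> borel_measurable PP"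
  using sigma_finite_measure.borel_measurable_nn_integral_fst[OF sf_PP, of "\<lambda>z. \<Phi> (fst z) (snd z)" PP] assms by simp

lemma ennreal_sq_add: "((a::ennreal) + b)\<^sup>2 \<le> 2 * a\<^sup>2 + 2 * b\<^sup>2"
proof (cases a rule: ennreal_cases)
  case (real x)
  then show ?thesis
  proof (cases b rule: ennreal_cases)
    case (real y)
    have "(x + y)\<^sup>2 \<le> 2 * x\<^sup>2 + 2 * y\<^sup>2" proof -
      have "0 \<le> (x - y)\<^sup>2" by simp
      then show ?thesis by (simp add: power2_eq_square algebra_simps)
    qed
    then have "ennreal ((x + y)\<^sup>2) \<le> ennreal (2 * x\<^sup>2 + 2 * y\<^sup>2)" by (rule ennreal_leI)
    also have "ennreal (2 * x\<^sup>2 + 2 * y\<^sup>2) = 2 * (ennreal x)\<^sup>2 + 2 * (ennreal y)\<^sup>2"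
      using \<open>0 \<le> x\<close> \<open>0 \<le> y\<close> by (simp add: ennreal_power ennreal_plus ennreal_mult)
    also have "ennreal ((x + y)\<^sup>2) = (ennreal x + ennreal y)\<^sup>2"
      using \<open>0 \<le> x\<close> \<open>0 \<le> y\<close> by (simp add: ennreal_power[symmetric] ennreal_plus)
    finally show ?thesis using \<open>a = ennreal x\<close> \<open>b = ennreal y\<close> by simp
  next
    case top then show ?thesis by (simp add: power2_eq_square)
  qed
next
  case top then show ?thesis by (simp add: power2_eq_square)
qed

lemma mCS1:
  assumes [measurable]: "\<And>n. F n \<in> borel_measurable lborel"
  shows "(\<lambda>y. ennreal (fF k b F (n - fst y) (\<tau> - snd y))) \<in> borel_measurable PP"
  by (rule meas_PP) (simp add: fF_def)

lemma mCS2: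
  assumes [measurable]: "\<And>n. G n \<in> borel_measurable lborel"
  shows "(\<lambda>y. ennreal (if \<bar>n - fst y\<bar> \<le> \<bar>fst y\<bar> then gG k b G (fst y) (snd y) * K0 k b n \<tau> (fst y) (snd y) else 0)) \<in> borel_measurable PP"
proof (rule meas_PP)
  fix m
  show "(\<lambda>t. ennreal (if \<bar>n - fst (m, t)\<bar> \<le> \<bar>fst (m, t)\<bar> then gG k b G (fst (m, t)) (snd (m, t)) * K0 k b n \<tau> (fst (m, t)) (snd (m, t)) else 0)) \<in> borel_measurable lborel"
    unfolding gG_def K0_def fst_conv snd_conv by measurable
qed

lemma mCS3:
  assumes [measurable]: "\<And>n. G n \<in> borel_measurable lborel"
  shows "(\<lambda>y. ennreal (gG k b G (fst y) (snd y))) \<in> borel_measurable PP"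
proof (rule meas_PP)
  fix m
  show "(\<lambda>t. ennreal (gG k b G (fst (m, t)) (snd (m, t)))) \<in> borel_measurable lborel"
    unfolding gG_def fst_conv snd_conv by measurable
qed

lemma mCS4:
  assumes [measurable]: "\<And>n. F n \<in> borel_measurable lborel"
  shows "(\<lambda>y. ennreal (if \<bar>n - fst y\<bar> \<le> \<bar>fst y\<bar> then 0 else fF k b F (n - fst y) (\<tau> - snd y) * K0 k b n \<tau> (fst y) (snd y))) \<in> borel_measurable PP"
proof (rule meas_PP)
  fix m
  show "(\<lambda>t. ennreal (if \<bar>n - fst (m, t)\<bar> \<le> \<bar>fst (m, t)\<bar> then 0 else fF k b F (n - fst (m, t)) (\<tau> - snd (m, t)) * K0 k b n \<tau> (fst (m, t)) (snd (m, t)))) \<in> borel_measurable lborel"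
    unfolding fF_def K0_def fst_conv snd_conv by measurable
qed

lemma mE1:
  assumes [measurable]: "\<And>n. F n \<in> borel_measurable lborel" "\<And>n. G n \<in> borel_measurable lborel"
  shows "(\<lambda>y. ennreal (if \<bar>n - fst y\<bar> \<le> \<bar>fst y\<bar> then cmod (F (n - fst y) (\<tau> - snd y)) * cmod (G (- fst y) (- snd y)) else 0)) \<in> borel_measurable PP"
proof (rule meas_PP)
  fix m
  show "(\<lambda>t. ennreal (if \<bar>n - fst (m, t)\<bar> \<le> \<bar>fst (m, t)\<bar> then cmod (F (n - fst (m, t)) (\<tau> - snd (m, t))) * cmod (G (- fst (m, t)) (- snd (m, t))) else 0)) \<in> borel_measurable lborel"
    unfolding fst_conv snd_conv by measurable
qed

lemma mE2:
  assumes [measurable]: "\<And>n. F n \<in> borel_measurable lborel" "\<And>n. G n \<in> borel_measurable lborel"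
  shows "(\<lambda>y. ennreal (if \<bar>n - fst y\<bar> \<le> \<bar>fst y\<bar> then 0 else cmod (F (n - fst y) (\<tau> - snd y)) * cmod (G (- fst y) (- snd y)))) \<in> borel_measurable PP"
proof (rule meas_PP)
  fix m
  show "(\<lambda>t. ennreal (if \<bar>n - fst (m, t)\<bar> \<le> \<bar>fst (m, t)\<bar> then 0 else cmod (F (n - fst (m, t)) (\<tau> - snd (m, t))) * cmod (G (- fst (m, t)) (- snd (m, t))))) \<in> borel_measurable lborel"
    unfolding fst_conv snd_conv by measurable
qed

lemma partF:
  fixes G :: "int \<Rightarrow> real \<Rightarrow> complex"
  assumes [measurable]: "\<And>n. G n \<in> borel_measurable lborel"
    and hS3: "\<And>m \<sigma>. (\<integral>\<^sup>+n. \<integral>\<^sup>+\<tau>. ennreal (if \<bar>n - m\<bar> \<le> \<bar>m\<bar> then Wt s p n \<tau> * Kr k q n \<tau> m \<sigma> else 0) \<partial>lborel \<partial>count_space UNIV) \<le> ennreal K"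
  shows "(\<integral>\<^sup>+x. ennreal (Wt s p (fst x) (snd x)) * (\<integral>\<^sup>+y. ennreal (if \<bar>fst x - fst y\<bar> \<le> \<bar>fst y\<bar> then (gG k b G (fst y) (snd y))\<^sup>2 * Kr k q (fst x) (snd x) (fst y) (snd y) else 0) \<partial>PP) \<partial>PP)
     \<le> ennreal K * Xper_sq k b G"
proof -
  define \<Psi> where "\<Psi> = (\<lambda>(n::int) (m::int) (\<tau>::real) (\<sigma>::real). ennreal (Wt s p n \<tau>) * ennreal (if \<bar>n - m\<bar> \<le> \<bar>m\<bar> then (gG k b G m \<sigma>)\<^sup>2 * Kr k q n \<tau> m \<sigma> else 0))"
  have m\<Psi>: "(\<lambda>z. \<Psi> (fst (fst z)) (fst (snd z)) (snd (fst z)) (snd (snd z))) \<in> borel_measurable (PP \<Otimes>\<^sub>M PP)"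
    by (rule meas_PPPP) (unfold \<Psi>_def Wt_def gG_def Kr_def, measurable)
  have mslice: "(\<lambda>y. ennreal (if \<bar>n - fst y\<bar> \<le> \<bar>fst y\<bar> then (gG k b G (fst y) (snd y))\<^sup>2 * Kr k q n \<tau> (fst y) (snd y) else 0)) \<in> borel_measurable PP" for n \<tau>
  proof (rule meas_PP)
    fix m
    show "(\<lambda>t. ennreal (if \<bar>n - fst (m, t)\<bar> \<le> \<bar>fst (m, t)\<bar> then (gG k b G (fst (m, t)) (snd (m, t)))\<^sup>2 * Kr k q n \<tau> (fst (m, t)) (snd (m, t)) else 0)) \<in> borel_measurable lborel"
      unfolding gG_def Kr_def fst_conv snd_conv by measurable
  qed
  have mslice2: "(\<lambda>x. ennreal (if \<bar>fst x - m\<bar> \<le> \<bar>m\<bar> then Wt s p (fst x) (snd x) * Kr k q (fst x) (snd x) m \<sigma> else 0)) \<in> borel_measurable PP" for m \<sigma>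
  proof (rule meas_PP)
    fix n
    show "(\<lambda>t. ennreal (if \<bar>fst (n, t) - m\<bar> \<le> \<bar>m\<bar> then Wt s p (fst (n, t)) (snd (n, t)) * Kr k q (fst (n, t)) (snd (n, t)) m \<sigma> else 0)) \<in> borel_measurable lborel"
      unfolding Wt_def Kr_def fst_conv snd_conv by measurable
  qed
  have "(\<integral>\<^sup>+x. ennreal (Wt s p (fst x) (snd x)) * (\<integral>\<^sup>+y. ennreal (if \<bar>fst x - fst y\<bar> \<le> \<bar>fst y\<bar> then (gG k b G (fst y) (snd y))\<^sup>2 * Kr k q (fst x) (snd x) (fst y) (snd y) else 0) \<partial>PP) \<partial>PP)
      = (\<integral>\<^sup>+x. \<integral>\<^sup>+y. \<Psi> (fst x) (fst y) (snd x) (snd y) \<partial>PP \<partial>PP)"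
    unfolding \<Psi>_def by (intro nn_integral_cong nn_integral_cmult[symmetric] mslice)
  also have "\<dots> = (\<integral>\<^sup>+y. \<integral>\<^sup>+x. \<Psi> (fst x) (fst y) (snd x) (snd y) \<partial>PP \<partial>PP)"
    by (rule swapPP[where \<Phi>="\<lambda>x y. \<Psi> (fst x) (fst y) (snd x) (snd y)"]) (use m\<Psi> in simp)
  also have "\<dots> = (\<integral>\<^sup>+y. ennreal ((gG k b G (fst y) (snd y))\<^sup>2) * (\<integral>\<^sup>+x. ennreal (if \<bar>fst x - fst y\<bar> \<le> \<bar>fst y\<bar> then Wt s p (fst x) (snd x) * Kr k q (fst x) (snd x) (fst y) (snd y) else 0) \<partial>PP) \<partial>PP)"
  proof (intro nn_integral_cong)
    fix y :: "int \<times> real"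
    have "(\<integral>\<^sup>+x. \<Psi> (fst x) (fst y) (snd x) (snd y) \<partial>PP) = (\<integral>\<^sup>+x. ennreal ((gG k b G (fst y) (snd y))\<^sup>2) * ennreal (if \<bar>fst x - fst y\<bar> \<le> \<bar>fst y\<bar> then Wt s p (fst x) (snd x) * Kr k q (fst x) (snd x) (fst y) (snd y) else 0) \<partial>PP)"
      unfolding \<Psi>_def by (intro nn_integral_cong) (simp add: ennreal_mult[symmetric] Wt_nn Kr_nn mult_ac)
    also have "\<dots> = ennreal ((gG k b G (fst y) (snd y))\<^sup>2) * (\<integral>\<^sup>+x. ennreal (if \<bar>fst x - fst y\<bar> \<le> \<bar>fst y\<bar> then Wt s p (fst x) (snd x) * Kr k q (fst x) (snd x) (fst y) (snd y) else 0) \<partial>PP)"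
      by (rule nn_integral_cmult) (rule mslice2)
    finally show "(\<integral>\<^sup>+x. \<Psi> (fst x) (fst y) (snd x) (snd y) \<partial>PP) = ennreal ((gG k b G (fst y) (snd y))\<^sup>2) * (\<integral>\<^sup>+x. ennreal (if \<bar>fst x - fst y\<bar> \<le> \<bar>fst y\<bar> then Wt s p (fst x) (snd x) * Kr k q (fst x) (snd x) (fst y) (snd y) else 0) \<partial>PP)" .
  qed
  also have "\<dots> \<le> (\<integral>\<^sup>+y. ennreal ((gG k b G (fst y) (snd y))\<^sup>2) * ennreal K \<partial>PP)"
  proof (intro nn_integral_mono mult_left_mono)
    fix y :: "int \<times> real"
    have "(\<integral>\<^sup>+x. ennreal (if \<bar>fst x - fst y\<bar> \<le> \<bar>fst y\<bar> then Wt s p (fst x) (snd x) * Kr k q (fst x) (snd x) (fst y) (snd y) else 0) \<partial>PP)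
       = (\<integral>\<^sup>+n. \<integral>\<^sup>+\<tau>. ennreal (if \<bar>n - fst y\<bar> \<le> \<bar>fst y\<bar> then Wt s p n \<tau> * Kr k q n \<tau> (fst y) (snd y) else 0) \<partial>lborel \<partial>count_space UNIV)"
      by (rule II_PP[symmetric, where f="\<lambda>n \<tau>. ennreal (if \<bar>n - fst y\<bar> \<le> \<bar>fst y\<bar> then Wt s p n \<tau> * Kr k q n \<tau> (fst y) (snd y) else 0)"]) (use mslice2 in simp)
    also have "\<dots> \<le> ennreal K" by (rule hS3)
    finally show "(\<integral>\<^sup>+x. ennreal (if \<bar>fst x - fst y\<bar> \<le> \<bar>fst y\<bar> then Wt s p (fst x) (snd x) * Kr k q (fst x) (snd x) (fst y) (snd y) else 0) \<partial>PP) \<le> ennreal K" .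
  qed simp
  also have "\<dots> = ennreal K * (\<integral>\<^sup>+y. ennreal ((gG k b G (fst y) (snd y))\<^sup>2) \<partial>PP)"
  proof -
    have "(\<lambda>y. ennreal ((gG k b G (fst y) (snd y))\<^sup>2)) \<in> borel_measurable PP"
    proof (rule meas_PP)
      fix m
      show "(\<lambda>t. ennreal ((gG k b G (fst (m, t)) (snd (m, t)))\<^sup>2)) \<in> borel_measurable lborel"
        unfolding gG_def fst_conv snd_conv by measurable
    qed
    then show ?thesis by (subst mult.commute) (rule nn_integral_cmult)
  qed
  also have "\<dots> = ennreal K * Xper_sq k b G"
    using F4[where G=G and k=k and b=b] by simp
  finally show ?thesis .
qed

lemma partG:
  fixes F :: "int \<Rightarrow> real \<Rightarrow> complex"
  assumes [measurable]: "\<And>n. F n \<in> borel_measurable lborel"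
    and hS2: "\<And>a \<alpha>. (\<integral>\<^sup>+m. \<integral>\<^sup>+\<sigma>. ennreal (if \<bar>m\<bar> < \<bar>a\<bar> then Wt s p (a + m) (\<alpha> + \<sigma>) * Kr k q (a + m) (\<alpha> + \<sigma>) m \<sigma> else 0) \<partial>lborel \<partial>count_space UNIV) \<le> ennreal K"
  shows "(\<integral>\<^sup>+x. ennreal (Wt s p (fst x) (snd x)) * (\<integral>\<^sup>+y. ennreal (if \<bar>fst x - fst y\<bar> \<le> \<bar>fst y\<bar> then 0 else (fF k b F (fst x - fst y) (snd x - snd y))\<^sup>2 * Kr k q (fst x) (snd x) (fst y) (snd y)) \<partial>PP) \<partial>PP)
     \<le> ennreal K * Xper_sq k b F"
proof -
  define \<Psi> where "\<Psi> = (\<lambda>(n::int) (m::int) (\<tau>::real) (\<sigma>::real). ennreal (Wt s p n \<tau>) * ennreal (if \<bar>n - m\<bar> \<le> \<bar>m\<bar> then 0 else (fF k b F (n - m) (\<tau> - \<sigma>))\<^sup>2 * Kr k q n \<tau> m \<sigma>))"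
  define \<Theta> where "\<Theta> = (\<lambda>(a::int) (m::int) (\<alpha>::real) (\<sigma>::real). ennreal (if \<bar>m\<bar> < \<bar>a\<bar> then Wt s p (a + m) (\<alpha> + \<sigma>) * (fF k b F a \<alpha>)\<^sup>2 * Kr k q (a + m) (\<alpha> + \<sigma>) m \<sigma> else 0))"
  have m\<Psi>: "(\<lambda>z. \<Psi> (fst (fst z)) (fst (snd z)) (snd (fst z)) (snd (snd z))) \<in> borel_measurable (PP \<Otimes>\<^sub>M PP)"
    by (rule meas_PPPP) (unfold \<Psi>_def Wt_def fF_def Kr_def, measurable)
  have m\<Theta>: "(\<lambda>z. \<Theta> (fst (fst z)) (fst (snd z)) (snd (fst z)) (snd (snd z))) \<in> borel_measurable (PP \<Otimes>\<^sub>M PP)"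
    by (rule meas_PPPP) (unfold \<Theta>_def Wt_def fF_def Kr_def, measurable)
  have mslice: "(\<lambda>y. ennreal (if \<bar>n - fst y\<bar> \<le> \<bar>fst y\<bar> then 0 else (fF k b F (n - fst y) (\<tau> - snd y))\<^sup>2 * Kr k q n \<tau> (fst y) (snd y))) \<in> borel_measurable PP" for n \<tau>
  proof (rule meas_PP)
    fix m
    show "(\<lambda>t. ennreal (if \<bar>n - fst (m, t)\<bar> \<le> \<bar>fst (m, t)\<bar> then 0 else (fF k b F (n - fst (m, t)) (\<tau> - snd (m, t)))\<^sup>2 * Kr k q n \<tau> (fst (m, t)) (snd (m, t)))) \<in> borel_measurable lborel"
      unfolding fF_def Kr_def fst_conv snd_conv by measurable
  qed
  have mslice\<Psi>: "(\<lambda>x. \<Psi> (fst x) m (snd x) \<sigma>) \<in> borel_measurable PP" for m \<sigma>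
  proof (rule meas_PP)
    fix n
    show "(\<lambda>t. \<Psi> (fst (n, t)) m (snd (n, t)) \<sigma>) \<in> borel_measurable lborel"
      unfolding \<Psi>_def Wt_def fF_def Kr_def fst_conv snd_conv by measurable
  qed
  have mslice\<Theta>: "(\<lambda>w. \<Theta> (fst w) m (snd w) \<sigma>) \<in> borel_measurable PP" for m \<sigma>
  proof (rule meas_PP)
    fix n
    show "(\<lambda>t. \<Theta> (fst (n, t)) m (snd (n, t)) \<sigma>) \<in> borel_measurable lborel"
      unfolding \<Theta>_def Wt_def fF_def Kr_def fst_conv snd_conv by measurable
  qed
  have mslice3: "(\<lambda>y. ennreal (if \<bar>fst y\<bar> < \<bar>a\<bar> then Wt s p (a + fst y) (\<alpha> + snd y) * Kr k q (a + fst y) (\<alpha> + snd y) (fst y) (snd y) else 0)) \<in> borel_measurable PP" for a \<alpha>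
  proof (rule meas_PP)
    fix m
    show "(\<lambda>t. ennreal (if \<bar>fst (m, t)\<bar> < \<bar>a\<bar> then Wt s p (a + fst (m, t)) (\<alpha> + snd (m, t)) * Kr k q (a + fst (m, t)) (\<alpha> + snd (m, t)) (fst (m, t)) (snd (m, t)) else 0)) \<in> borel_measurable lborel"
      unfolding Wt_def Kr_def fst_conv snd_conv by measurable
  qed
  have "(\<integral>\<^sup>+x. ennreal (Wt s p (fst x) (snd x)) * (\<integral>\<^sup>+y. ennreal (if \<bar>fst x - fst y\<bar> \<le> \<bar>fst y\<bar> then 0 else (fF k b F (fst x - fst y) (snd x - snd y))\<^sup>2 * Kr k q (fst x) (snd x) (fst y) (snd y)) \<partial>PP) \<partial>PP)
      = (\<integral>\<^sup>+x. \<integral>\<^sup>+y. \<Psi> (fst x) (fst y) (snd x) (snd y) \<partial>PP \<partial>PP)"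
    unfolding \<Psi>_def by (intro nn_integral_cong nn_integral_cmult[symmetric] mslice)
  also have "\<dots> = (\<integral>\<^sup>+y. \<integral>\<^sup>+x. \<Psi> (fst x) (fst y) (snd x) (snd y) \<partial>PP \<partial>PP)"
    by (rule swapPP[where \<Phi>="\<lambda>x y. \<Psi> (fst x) (fst y) (snd x) (snd y)"]) (use m\<Psi> in simp)
  also have "\<dots> = (\<integral>\<^sup>+y. \<integral>\<^sup>+w. \<Theta> (fst w) (fst y) (snd w) (snd y) \<partial>PP \<partial>PP)"
  proof (rule nn_integral_cong)
    fix y :: "int \<times> real"
    obtain m \<sigma> where y: "y = (m, \<sigma>)" by (cases y)
    have "(\<integral>\<^sup>+x. \<Psi> (fst x) m (snd x) \<sigma> \<partial>PP) = (\<integral>\<^sup>+n. \<integral>\<^sup>+\<tau>. \<Psi> n m \<tau> \<sigma> \<partial>lborel \<partial>count_space UNIV)"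
      by (rule II_PP[symmetric, where f="\<lambda>n \<tau>. \<Psi> n m \<tau> \<sigma>"]) (use mslice\<Psi> in simp)
    also have "\<dots> = (\<integral>\<^sup>+n. \<integral>\<^sup>+\<alpha>. \<Psi> n m (\<alpha> + \<sigma>) \<sigma> \<partial>lborel \<partial>count_space UNIV)"
    proof (rule nn_integral_cong)
      fix n
      show "(\<integral>\<^sup>+\<tau>. \<Psi> n m \<tau> \<sigma> \<partial>lborel) = (\<integral>\<^sup>+\<alpha>. \<Psi> n m (\<alpha> + \<sigma>) \<sigma> \<partial>lborel)"
        by (rule nn_translate[symmetric]) (unfold \<Psi>_def Wt_def fF_def Kr_def, measurable)
    qed
    also have "\<dots> = (\<integral>\<^sup>+a. \<integral>\<^sup>+\<alpha>. \<Psi> (a + m) m (\<alpha> + \<sigma>) \<sigma> \<partial>lborel \<partial>count_space UNIV)"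
    proof -
      have "bij_betw (\<lambda>a::int. a + m) UNIV UNIV" by (rule bij_betwI[where g="\<lambda>n. n - m"]) auto
      from nn_integral_bij_count_space[OF this, of "\<lambda>n. \<integral>\<^sup>+\<alpha>. \<Psi> n m (\<alpha> + \<sigma>) \<sigma> \<partial>lborel"]
      show ?thesis by simp
    qed
    also have "\<dots> = (\<integral>\<^sup>+a. \<integral>\<^sup>+\<alpha>. \<Theta> a m \<alpha> \<sigma> \<partial>lborel \<partial>count_space UNIV)"
      unfolding \<Psi>_def \<Theta>_def
      by (intro nn_integral_cong) (auto simp: ennreal_mult[symmetric] Wt_nn Kr_nn mult_ac not_le)
    also have "\<dots> = (\<integral>\<^sup>+w. \<Theta> (fst w) m (snd w) \<sigma> \<partial>PP)"
      by (rule II_PP[where f="\<lambda>a \<alpha>. \<Theta> a m \<alpha> \<sigma>"]) (use mslice\<Theta> in simp)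
    finally show "(\<integral>\<^sup>+x. \<Psi> (fst x) (fst y) (snd x) (snd y) \<partial>PP) = (\<integral>\<^sup>+w. \<Theta> (fst w) (fst y) (snd w) (snd y) \<partial>PP)"
      by (simp add: y)
  qed
  also have "\<dots> = (\<integral>\<^sup>+w. \<integral>\<^sup>+y. \<Theta> (fst w) (fst y) (snd w) (snd y) \<partial>PP \<partial>PP)"
    by (rule swapPP[where \<Phi>="\<lambda>w y. \<Theta> (fst w) (fst y) (snd w) (snd y)", symmetric]) (use m\<Theta> in simp)
  also have "\<dots> = (\<integral>\<^sup>+w. ennreal ((fF k b F (fst w) (snd w))\<^sup>2) * (\<integral>\<^sup>+y. ennreal (if \<bar>fst y\<bar> < \<bar>fst w\<bar> then Wt s p (fst w + fst y) (snd w + snd y) * Kr k q (fst w + fst y) (snd w + snd y) (fst y) (snd y) else 0) \<partial>PP) \<partial>PP)"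
  proof (rule nn_integral_cong)
    fix w :: "int \<times> real"
    have "(\<integral>\<^sup>+y. \<Theta> (fst w) (fst y) (snd w) (snd y) \<partial>PP) = (\<integral>\<^sup>+y. ennreal ((fF k b F (fst w) (snd w))\<^sup>2) * ennreal (if \<bar>fst y\<bar> < \<bar>fst w\<bar> then Wt s p (fst w + fst y) (snd w + snd y) * Kr k q (fst w + fst y) (snd w + snd y) (fst y) (snd y) else 0) \<partial>PP)"
      unfolding \<Theta>_def by (intro nn_integral_cong) (simp add: ennreal_mult[symmetric] Wt_nn Kr_nn mult_ac)
    also have "\<dots> = ennreal ((fF k b F (fst w) (snd w))\<^sup>2) * (\<integral>\<^sup>+y. ennreal (if \<bar>fst y\<bar> < \<bar>fst w\<bar> then Wt s p (fst w + fst y) (snd w + snd y) * Kr k q (fst w + fst y) (snd w + snd y) (fst y) (snd y) else 0) \<partial>PP)"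
      by (rule nn_integral_cmult) (rule mslice3)
    finally show "(\<integral>\<^sup>+y. \<Theta> (fst w) (fst y) (snd w) (snd y) \<partial>PP) = ennreal ((fF k b F (fst w) (snd w))\<^sup>2) * (\<integral>\<^sup>+y. ennreal (if \<bar>fst y\<bar> < \<bar>fst w\<bar> then Wt s p (fst w + fst y) (snd w + snd y) * Kr k q (fst w + fst y) (snd w + snd y) (fst y) (snd y) else 0) \<partial>PP)" .
  qed
  also have "\<dots> \<le> (\<integral>\<^sup>+w. ennreal ((fF k b F (fst w) (snd w))\<^sup>2) * ennreal K \<partial>PP)"
  proof (intro nn_integral_mono mult_left_mono)
    fix w :: "int \<times> real"
    have "(\<integral>\<^sup>+y. ennreal (if \<bar>fst y\<bar> < \<bar>fst w\<bar> then Wt s p (fst w + fst y) (snd w + snd y) * Kr k q (fst w + fst y) (snd w + snd y) (fst y) (snd y) else 0) \<partial>PP)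
       = (\<integral>\<^sup>+m. \<integral>\<^sup>+\<sigma>. ennreal (if \<bar>m\<bar> < \<bar>fst w\<bar> then Wt s p (fst w + m) (snd w + \<sigma>) * Kr k q (fst w + m) (snd w + \<sigma>) m \<sigma> else 0) \<partial>lborel \<partial>count_space UNIV)"
      by (rule II_PP[symmetric, where f="\<lambda>m \<sigma>. ennreal (if \<bar>m\<bar> < \<bar>fst w\<bar> then Wt s p (fst w + m) (snd w + \<sigma>) * Kr k q (fst w + m) (snd w + \<sigma>) m \<sigma> else 0)"]) (use mslice3 in simp)
    also have "\<dots> \<le> ennreal K" by (rule hS2)
    finally show "(\<integral>\<^sup>+y. ennreal (if \<bar>fst y\<bar> < \<bar>fst w\<bar> then Wt s p (fst w + fst y) (snd w + snd y) * Kr k q (fst w + fst y) (snd w + snd y) (fst y) (snd y) else 0) \<partial>PP) \<le> ennreal K" .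
  qed simp
  also have "\<dots> = ennreal K * (\<integral>\<^sup>+w. ennreal ((fF k b F (fst w) (snd w))\<^sup>2) \<partial>PP)"
  proof -
    have "(\<lambda>w. ennreal ((fF k b F (fst w) (snd w))\<^sup>2)) \<in> borel_measurable PP"
    proof (rule meas_PP)
      fix m
      show "(\<lambda>t. ennreal ((fF k b F (fst (m, t)) (snd (m, t)))\<^sup>2)) \<in> borel_measurable lborel"
        unfolding fF_def fst_conv snd_conv by measurable
    qed
    then show ?thesis by (subst mult.commute) (rule nn_integral_cmult)
  qed
  also have "\<dots> = ennreal K * Xper_sq k b F"
    using F3[where F=F and k=k and b=b] by simp
  finally show ?thesis .
qed

lemma main_est:
  fixes F G :: "int \<Rightarrow> real \<Rightarrow> complex" and k s b b' p K :: real
  assumes [measurable]: "\<And>n. F n \<in> borel_measurable lborel" "\<And>n. G n \<in> borel_measurable lborel"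
    and bp: "2 * b' = - p" and K0: "0 \<le> K"
    and hS3: "\<And>m \<sigma>. (\<integral>\<^sup>+n. \<integral>\<^sup>+\<tau>. ennreal (if \<bar>n - m\<bar> \<le> \<bar>m\<bar> then Wt s p n \<tau> * Kr k (2 * b) n \<tau> m \<sigma> else 0) \<partial>lborel \<partial>count_space UNIV) \<le> ennreal K"
    and hS2: "\<And>a \<alpha>. (\<integral>\<^sup>+m. \<integral>\<^sup>+\<sigma>. ennreal (if \<bar>m\<bar> < \<bar>a\<bar> then Wt s p (a + m) (\<alpha> + \<sigma>) * Kr k (2 * b) (a + m) (\<alpha> + \<sigma>) m \<sigma> else 0) \<partial>lborel \<partial>count_space UNIV) \<le> ennreal K"
  shows "HH_sq b' s (prod_conj_hat F G) \<le> ennreal (4 * K) * Xper_sq k b F * Xper_sq k b G"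
proof -
  define XF where "XF = Xper_sq k b F"
  define XG where "XG = Xper_sq k b G"
  define E1 where "E1 = (\<lambda>n \<tau>. \<integral>\<^sup>+y. ennreal (if \<bar>n - fst y\<bar> \<le> \<bar>fst y\<bar> then cmod (F (n - fst y) (\<tau> - snd y)) * cmod (G (- fst y) (- snd y)) else 0) \<partial>PP)"
  define E2 where "E2 = (\<lambda>n \<tau>. \<integral>\<^sup>+y. ennreal (if \<bar>n - fst y\<bar> \<le> \<bar>fst y\<bar> then 0 else cmod (F (n - fst y) (\<tau> - snd y)) * cmod (G (- fst y) (- snd y))) \<partial>PP)"
  define B1 where "B1 = (\<lambda>n \<tau>. \<integral>\<^sup>+y. ennreal (if \<bar>n - fst y\<bar> \<le> \<bar>fst y\<bar> then (gG k b G (fst y) (snd y))\<^sup>2 * Kr k (2 * b) n \<tau> (fst y) (snd y) else 0) \<partial>PP)"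
  define B2 where "B2 = (\<lambda>n \<tau>. \<integral>\<^sup>+y. ennreal (if \<bar>n - fst y\<bar> \<le> \<bar>fst y\<bar> then 0 else (fF k b F (n - fst y) (\<tau> - snd y))\<^sup>2 * Kr k (2 * b) n \<tau> (fst y) (snd y)) \<partial>PP)"

  have stepA: "ennreal (cmod (prod_conj_hat F G n \<tau>)) \<le> E1 n \<tau> + E2 n \<tau>" for n \<tau>
  proof -
    have "ennreal (cmod (prod_conj_hat F G n \<tau>)) \<le> (\<integral>\<^sup>+y. ennreal (cmod (F (n - fst y) (\<tau> - snd y)) * cmod (G (- fst y) (- snd y))) \<partial>PP)"
      by (rule pch_bound) simp_all
    also have "\<dots> = (\<integral>\<^sup>+y. ennreal (if \<bar>n - fst y\<bar> \<le> \<bar>fst y\<bar> then cmod (F (n - fst y) (\<tau> - snd y)) * cmod (G (- fst y) (- snd y)) else 0)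
          + ennreal (if \<bar>n - fst y\<bar> \<le> \<bar>fst y\<bar> then 0 else cmod (F (n - fst y) (\<tau> - snd y)) * cmod (G (- fst y) (- snd y))) \<partial>PP)"
      by (intro nn_integral_cong) simp
    also have "\<dots> = E1 n \<tau> + E2 n \<tau>"
      unfolding E1_def E2_def using mE1[where F=F and G=G and n=n and \<tau>=\<tau>] mE2[where F=F and G=G and n=n and \<tau>=\<tau>] by (intro nn_integral_add) auto
    finally show ?thesis .
  qed

  have stepB: "(E1 n \<tau>)\<^sup>2 \<le> XF * B1 n \<tau>" for n \<tau>
  proof -
    define f where "f = (\<lambda>y. ennreal (fF k b F (n - fst y) (\<tau> - snd y)))"
    define g where "g = (\<lambda>y. ennreal (if \<bar>n - fst y\<bar> \<le> \<bar>fst y\<bar> then gG k b G (fst y) (snd y) * K0 k b n \<tau> (fst y) (snd y) else 0))"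
    have "E1 n \<tau> = (\<integral>\<^sup>+y. f y * g y \<partial>PP)"
      unfolding E1_def
    proof (intro nn_integral_cong)
      fix y :: "int \<times> real"
      show "ennreal (if \<bar>n - fst y\<bar> \<le> \<bar>fst y\<bar> then cmod (F (n - fst y) (\<tau> - snd y)) * cmod (G (- fst y) (- snd y)) else 0) = f y * g y"
        using F1[where F=F and n=n and m="fst y" and \<tau>=\<tau> and \<sigma>="snd y" and G=G and k=k and b=b] fF_nn gG_nn K0_nn
        by (simp add: f_def g_def ennreal_mult[symmetric] mult_ac)
    qed
    also have "(\<dots>)\<^sup>2 \<le> (\<integral>\<^sup>+y. f y ^ 2 \<partial>PP) * (\<integral>\<^sup>+y. g y ^ 2 \<partial>PP)"
      using Cauchy_Schwarz_nn_integral[of f PP g] mCS1[where F=F and n=n and \<tau>=\<tau> and k=k and b=b] mCS2[where G=G and n=n and \<tau>=\<tau> and k=k and b=b]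
      unfolding f_def g_def by simp
    also have "(\<integral>\<^sup>+y. f y ^ 2 \<partial>PP) = XF"
      unfolding XF_def f_def using F5[where F=F and k=k and b=b and n=n and \<tau>=\<tau>] by (simp add: ennreal_power fF_nn)
    also have "(\<integral>\<^sup>+y. g y ^ 2 \<partial>PP) = B1 n \<tau>"
      unfolding B1_def g_def
      by (intro nn_integral_cong) (simp add: ennreal_power gG_nn K0_nn power_mult_distrib F2)
    finally show ?thesis .
  qed

  have stepC: "(E2 n \<tau>)\<^sup>2 \<le> XG * B2 n \<tau>" for n \<tau>
  proof -
    define f where "f = (\<lambda>y. ennreal (gG k b G (fst y) (snd y)))"
    define g where "g = (\<lambda>y. ennreal (if \<bar>n - fst y\<bar> \<le> \<bar>fst y\<bar> then 0 else fF k b F (n - fst y) (\<tau> - snd y) * K0 k b n \<tau> (fst y) (snd y)))"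
    have "E2 n \<tau> = (\<integral>\<^sup>+y. f y * g y \<partial>PP)"
      unfolding E2_def
    proof (intro nn_integral_cong)
      fix y :: "int \<times> real"
      show "ennreal (if \<bar>n - fst y\<bar> \<le> \<bar>fst y\<bar> then 0 else cmod (F (n - fst y) (\<tau> - snd y)) * cmod (G (- fst y) (- snd y))) = f y * g y"
        using F1[where F=F and n=n and m="fst y" and \<tau>=\<tau> and \<sigma>="snd y" and G=G and k=k and b=b] fF_nn gG_nn K0_nn
        by (simp add: f_def g_def ennreal_mult[symmetric] mult_ac)
    qed
    also have "(\<dots>)\<^sup>2 \<le> (\<integral>\<^sup>+y. f y ^ 2 \<partial>PP) * (\<integral>\<^sup>+y. g y ^ 2 \<partial>PP)"
      using Cauchy_Schwarz_nn_integral[of f PP g] mCS3[where G=G and k=k and b=b] mCS4[where F=F and n=n and \<tau>=\<tau> and k=k and b=b]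
      unfolding f_def g_def by simp
    also have "(\<integral>\<^sup>+y. f y ^ 2 \<partial>PP) = XG"
      unfolding XG_def f_def using F4[where G=G and k=k and b=b] by (simp add: ennreal_power gG_nn)
    also have "(\<integral>\<^sup>+y. g y ^ 2 \<partial>PP) = B2 n \<tau>"
      unfolding B2_def g_def
      by (intro nn_integral_cong) (simp add: ennreal_power fF_nn K0_nn power_mult_distrib F2)
    finally show ?thesis .
  qed

  have mW: "(\<lambda>x. ennreal (Wt s p (fst x) (snd x))) \<in> borel_measurable PP"
  proof (rule meas_PP)
    fix n
    show "(\<lambda>t. ennreal (Wt s p (fst (n, t)) (snd (n, t)))) \<in> borel_measurable lborel"
      unfolding Wt_def fst_conv snd_conv by measurable
  qed
  have mB1: "(\<lambda>x. B1 (fst x) (snd x)) \<in> borel_measurable PP"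
  proof -
    define \<Psi> where "\<Psi> = (\<lambda>(n::int) (m::int) (\<tau>::real) (\<sigma>::real). ennreal (if \<bar>n - m\<bar> \<le> \<bar>m\<bar> then (gG k b G m \<sigma>)\<^sup>2 * Kr k (2 * b) n \<tau> m \<sigma> else 0))"
    have "(\<lambda>z. \<Psi> (fst (fst z)) (fst (snd z)) (snd (fst z)) (snd (snd z))) \<in> borel_measurable (PP \<Otimes>\<^sub>M PP)"
      by (rule meas_PPPP) (unfold \<Psi>_def gG_def Kr_def, measurable)
    from measPP_int[where \<Phi>="\<lambda>x y. \<Psi> (fst x) (fst y) (snd x) (snd y)"] this
    show ?thesis unfolding B1_def \<Psi>_def by simp
  qed
  have mB2: "(\<lambda>x. B2 (fst x) (snd x)) \<in> borel_measurable PP"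
  proof -
    define \<Psi> where "\<Psi> = (\<lambda>(n::int) (m::int) (\<tau>::real) (\<sigma>::real). ennreal (if \<bar>n - m\<bar> \<le> \<bar>m\<bar> then 0 else (fF k b F (n - m) (\<tau> - \<sigma>))\<^sup>2 * Kr k (2 * b) n \<tau> m \<sigma>))"
    have "(\<lambda>z. \<Psi> (fst (fst z)) (fst (snd z)) (snd (fst z)) (snd (snd z))) \<in> borel_measurable (PP \<Otimes>\<^sub>M PP)"
      by (rule meas_PPPP) (unfold \<Psi>_def fF_def Kr_def, measurable)
    from measPP_int[where \<Phi>="\<lambda>x y. \<Psi> (fst x) (fst y) (snd x) (snd y)"] this
    show ?thesis unfolding B2_def \<Psi>_def by simp
  qed
  have point: "ennreal (jb (of_int n) powr (2 * s) * jb \<tau> powr (2 * b') * (cmod (prod_conj_hat F G n \<tau>))\<^sup>2)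
      \<le> 2 * XF * (ennreal (Wt s p n \<tau>) * B1 n \<tau>) + 2 * XG * (ennreal (Wt s p n \<tau>) * B2 n \<tau>)" for n \<tau>
  proof -
    have "ennreal (jb (of_int n) powr (2 * s) * jb \<tau> powr (2 * b') * (cmod (prod_conj_hat F G n \<tau>))\<^sup>2)
        = ennreal (Wt s p n \<tau>) * (ennreal (cmod (prod_conj_hat F G n \<tau>)))\<^sup>2"
      by (simp add: Wt_def bp ennreal_mult ennreal_power)
    also have "\<dots> \<le> ennreal (Wt s p n \<tau>) * (E1 n \<tau> + E2 n \<tau>)\<^sup>2"
      by (intro mult_left_mono power_mono stepA) auto
    also have "\<dots> \<le> ennreal (Wt s p n \<tau>) * (2 * (E1 n \<tau>)\<^sup>2 + 2 * (E2 n \<tau>)\<^sup>2)"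
      by (intro mult_left_mono ennreal_sq_add) auto
    also have "\<dots> \<le> ennreal (Wt s p n \<tau>) * (2 * (XF * B1 n \<tau>) + 2 * (XG * B2 n \<tau>))"
      by (intro mult_left_mono add_mono stepB stepC) auto
    also have "\<dots> = 2 * XF * (ennreal (Wt s p n \<tau>) * B1 n \<tau>) + 2 * XG * (ennreal (Wt s p n \<tau>) * B2 n \<tau>)"
      by (simp add: algebra_simps)
    finally show ?thesis .
  qed
  have "HH_sq b' s (prod_conj_hat F G) \<le> (\<integral>\<^sup>+n. \<integral>\<^sup>+\<tau>. 2 * XF * (ennreal (Wt s p n \<tau>) * B1 n \<tau>) + 2 * XG * (ennreal (Wt s p n \<tau>) * B2 n \<tau>) \<partial>lborel \<partial>count_space UNIV)"
    unfolding HH_sq_def by (intro nn_integral_mono point)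
  also have "\<dots> = (\<integral>\<^sup>+x. 2 * XF * (ennreal (Wt s p (fst x) (snd x)) * B1 (fst x) (snd x)) + 2 * XG * (ennreal (Wt s p (fst x) (snd x)) * B2 (fst x) (snd x)) \<partial>PP)"
    by (rule II_PP[where f="\<lambda>n \<tau>. 2 * XF * (ennreal (Wt s p n \<tau>) * B1 n \<tau>) + 2 * XG * (ennreal (Wt s p n \<tau>) * B2 n \<tau>)"])
      (use mW mB1 mB2 in measurable)
  also have "\<dots> = 2 * XF * (\<integral>\<^sup>+x. ennreal (Wt s p (fst x) (snd x)) * B1 (fst x) (snd x) \<partial>PP) + 2 * XG * (\<integral>\<^sup>+x. ennreal (Wt s p (fst x) (snd x)) * B2 (fst x) (snd x) \<partial>PP)"
    using mW mB1 mB2 by (simp add: nn_integral_add nn_integral_cmult)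
  also have "\<dots> \<le> 2 * XF * (ennreal K * XG) + 2 * XG * (ennreal K * XF)"
  proof (intro add_mono mult_left_mono)
    show "(\<integral>\<^sup>+x. ennreal (Wt s p (fst x) (snd x)) * B1 (fst x) (snd x) \<partial>PP) \<le> ennreal K * XG"
      unfolding B1_def XG_def by (rule partF) (use hS3 in auto)
    show "(\<integral>\<^sup>+x. ennreal (Wt s p (fst x) (snd x)) * B2 (fst x) (snd x) \<partial>PP) \<le> ennreal K * XF"
      unfolding B2_def XF_def by (rule partG) (use hS2 in auto)
  qed auto
  also have "\<dots> = ennreal (4 * K) * Xper_sq k b F * Xper_sq k b G"
  proof -
    have e: "2 * XF * (ennreal K * XG) + 2 * XG * (ennreal K * XF) = (2 + 2) * (ennreal K * XF * XG)"
      by (simp only: distrib_left distrib_right mult_ac)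
    have f: "ennreal (4 * K) = (2 + 2) * ennreal K" using K0 by (simp add: ennreal_mult)
    show ?thesis unfolding e f XF_def[symmetric] XG_def[symmetric] by (simp only: mult_ac)
  qed
  finally show ?thesis .
qed


theorem proposition4p2:
  fixes k s :: real
  assumes "0 \<le> s" and "s \<le> 2 * k" and "\<bar>k - s\<bar> < 1"
  shows "\<exists>\<eta>0>0. \<forall>\<eta>. 0 < \<eta> \<and> \<eta> < \<eta>0 \<longrightarrow>
    (\<exists>C::real. \<forall>F G :: int \<Rightarrow> real \<Rightarrow> complex.
       (\<forall>n. F n \<in> borel_measurable lborel) \<longrightarrow> (\<forall>n. G n \<in> borel_measurable lborel) \<longrightarrow>
       Xper_sq k (1/2 + \<eta>) F < \<infinity> \<longrightarrow> Xper_sq k (1/2 + \<eta>) G < \<infinity> \<longrightarrow>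
       HH_sq (-1/2 + \<eta>) s (prod_conj_hat F G)
         \<le> ennreal (C^2) * Xper_sq k (1/2 + \<eta>) F * Xper_sq k (1/2 + \<eta>) G)"
proof -
  define g where "g = 1 - (s - k)"
  have g0: "g > 0" using assms(3) by (simp add: g_def)
  define \<delta> where "\<delta> = min g (1/2)"
  define \<eta>0 where "\<eta>0 = min (1/4) (g/4)"
  have \<eta>00: "\<eta>0 > 0" using g0 by (simp add: \<eta>0_def)
  have k0: "k \<ge> 0" using assms(1,2) by linarith
  show ?thesis
  proof (rule exI[of _ \<eta>0], intro conjI \<eta>00 allI impI)
    fix \<eta> :: real
    assume \<eta>: "0 < \<eta> \<and> \<eta> < \<eta>0"
    define p where "p = 1 - 2 * \<eta>"
    define b where "b = 1/2 + \<eta>"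
    define q where "q = 2 * b"
    define r where "r = min (2 * k) (1 - \<delta>)"
    have \<eta>1: "\<eta> < 1/4" "4 * \<eta> < g" using \<eta> by (auto simp: \<eta>0_def)
    have r: "0 \<le> r" "r < 1" "r \<le> 2*k" using k0 g0 by (auto simp: r_def \<delta>_def)
    have pp: "0 < p" "p < 1" "1 < 2*p" using \<eta> \<eta>1 by (auto simp: p_def)
    have ss: "s \<le> 2*k" "2 * s - 2*k + 1 - r - 2*p \<le> 0"
    proof -
      show "s \<le> 2*k" using assms(2) by simp
      have "2 * s - 2*k + 1 - 2 * k - 2*p \<le> 0" using assms(2) \<eta>1 by (simp add: p_def)
      moreover have "2 * s - 2*k + 1 - (1 - \<delta>) - 2*p \<le> 0" using \<eta>1 by (simp add: p_def g_def \<delta>_def)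
      ultimately show "2 * s - 2*k + 1 - r - 2*p \<le> 0" by (simp add: r_def min_def)
    qed
    define KN where "KN = 2 * (2 powr p * 2 powr (r + 2*p - 1) / (1 - r) + 2 powr (2*k) / (1 - p) + 1)"
    have NLb: "\<And>N::int. jb (of_int N) powr (2 * s - 2*k) * (\<Sum>a\<in>{-\<bar>N\<bar>..\<bar>N\<bar>}. jb (of_int a) powr (-2*k) * jb ((of_int N)\<^sup>2 - (of_int a)\<^sup>2) powr (-p)) \<le> KN"
      unfolding KN_def using NL_int[OF r pp ss] by simp
    have pq: "0 \<le> p" "p \<le> q" "1 < q" using \<eta> pp by (auto simp: p_def q_def b_def)
    define K where "K = 2 powr q * (4 / (q - 1)) * 2 powr (2 * s) * KN"
    have KN0: "0 \<le> KN" unfolding KN_def using r pp by (intro mult_nonneg_nonneg add_nonneg_nonneg) auto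
    have K0: "0 \<le> K" unfolding K_def using pq KN0 by simp
    show "\<exists>C::real. \<forall>F G :: int \<Rightarrow> real \<Rightarrow> complex.
       (\<forall>n. F n \<in> borel_measurable lborel) \<longrightarrow> (\<forall>n. G n \<in> borel_measurable lborel) \<longrightarrow>
       Xper_sq k (1/2 + \<eta>) F < \<infinity> \<longrightarrow> Xper_sq k (1/2 + \<eta>) G < \<infinity> \<longrightarrow>
       HH_sq (-1/2 + \<eta>) s (prod_conj_hat F G)
         \<le> ennreal (C^2) * Xper_sq k (1/2 + \<eta>) F * Xper_sq k (1/2 + \<eta>) G"
    proof (rule exI[of _ "sqrt (4 * K)"], intro allI impI)
      fix F G :: "int \<Rightarrow> real \<Rightarrow> complex"
      assume mF: "\<forall>n. F n \<in> borel_measurable lborel" and mG: "\<forall>n. G n \<in> borel_measurable lborel"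
      have "HH_sq (-1/2 + \<eta>) s (prod_conj_hat F G) \<le> ennreal (4 * K) * Xper_sq k b F * Xper_sq k b G"
      proof (rule main_est[where p=p])
        show "\<And>n. F n \<in> borel_measurable lborel" using mF by simp
        show "\<And>n. G n \<in> borel_measurable lborel" using mG by simp
        show "2 * (-1/2 + \<eta>) = - p" by (simp add: p_def)
        show "0 \<le> K" by (rule K0)
        show "\<And>m \<sigma>. (\<integral>\<^sup>+n. \<integral>\<^sup>+\<tau>. ennreal (if \<bar>n - m\<bar> \<le> \<bar>m\<bar> then Wt s p n \<tau> * Kr k (2 * b) n \<tau> m \<sigma> else 0) \<partial>lborel \<partial>count_space UNIV) \<le> ennreal K"
          unfolding K_def q_def[symmetric] by (rule S3[OF assms(1) pq NLb])
        show "\<And>a \<alpha>. (\<integral>\<^sup>+m. \<integral>\<^sup>+\<sigma>. ennreal (if \<bar>m\<bar> < \<bar>a\<bar> then Wt s p (a + m) (\<alpha> + \<sigma>) * Kr k (2 * b) (a + m) (\<alpha> + \<sigma>) m \<sigma> else 0) \<partial>lborel \<partial>count_space UNIV) \<le> ennreal K"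
          unfolding K_def q_def[symmetric] by (rule S2[OF assms(1) pq NLb])
      qed
      moreover have "(sqrt (4 * K))\<^sup>2 = 4 * K" using K0 by simp
      ultimately show "HH_sq (-1/2 + \<eta>) s (prod_conj_hat F G) \<le> ennreal ((sqrt (4 * K))^2) * Xper_sq k (1/2 + \<eta>) F * Xper_sq k (1/2 + \<eta>) G"
        by (simp add: b_def)
    qed
  qed
qed

end
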